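(* Let $\mathcal H$ be a complex Hilbert space of finite dimension $d$, and $\mathcal P_N$ the convex set of $N$-outcome POVMs on $\mathcal H$. For $\mathbf P=(P_1,\dots,P_N)\in\mathcal P_N$, let $\{|v^{(e)}_n\rangle\}_{n=1}^{\mathrm{rank}(P_e)}$ be an orthonormal set of eigenvectors of $P_e$ with nonzero eigenvalues, and define $$r(\mathbf P)=\sum_{e=1}^N\mathrm{rank}(P_e)^2,\qquad l(\mathbf P)=\dim\mathrm{Span}\{|v^{(e)}_m\rangle\langle v^{(e)}_n| : 1\le e\le N,\ 1\le m,n\le \mathrm{rank}(P_e)\},\qquad b(\mathbf P)=r(\mathbf P)-l(\mathbf P).$$ Then $\mathbf P\in\partial\mathcal P_N$ if and only if $b(\mathbf P)<d^2(N-1)$. Moreover, $b(\mathbf P)$ is the dimension of the face of $\mathcal P_N$ in which $\mathbf P$ lies, i.e. the real dimension of the space of $N$-tuples $\mathbf D$ of Hermitian operators such that $\mathbf P\pm\epsilon\mathbf D\in\mathcal P_N$ for some $\epsilon>0$.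
   Context: $\mathcal P_N$ is the set of $N$-tuples of positive semidefinite operators on $\mathcal H$ (zero allowed) summing to $I$; it is a convex subset of a real affine space of dimension $d^2(N-1)$. The span is the complex linear span in the space of operators on $\mathcal H$. For a convex set $\mathcal C$, a point $p\in\mathcal C$ belongs to $\partial\mathcal C$ iff there exists $q\in\mathcal C$ with $p+\epsilon(q-p)\in\mathcal C$ and $p-\epsilon(q-p)\notin\mathcal C$ for all $\epsilon\in(0,1]$. *)

theory Defs
  imports "HOL-Analysis.Analysis"
begin

text \<open>Operators on H = complex^'n (d = CARD('n)) are matrices complex^'n^'n.
  N-tuples of operators are indexed by a finite type 'e (N = CARD('e)).\<close>

type_synonym 'n op = "complex^'n::finite^'n"

definition cinner :: "complex^'n::finite \<Rightarrow> complex^'n \<Rightarrow> complex" where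
  "cinner x y = (\<Sum>i\<in>UNIV. cnj (x$i) * y$i)"

definition cadj :: "('n::finite) op \<Rightarrow> ('n::finite) op" where
  "cadj A = (\<chi> i j. cnj (A$j$i))"

definition hermitian_op :: "('n::finite) op \<Rightarrow> bool" where
  "hermitian_op A \<longleftrightarrow> cadj A = A"

definition psd_op :: "('n::finite) op \<Rightarrow> bool" where
  "psd_op A \<longleftrightarrow> hermitian_op A \<and> (\<forall>x. 0 \<le> Re (cinner x (A *v x)))"

definition outer :: "complex^('n::finite) \<Rightarrow> complex^'n \<Rightarrow> 'n op" where
  "outer v w = (\<chi> i j. v$i * cnj (w$j))"

definition POVMs :: "((('n::finite) op)^('e::finite)) set" where
  "POVMs = {P. (\<forall>e. psd_op (P$e)) \<and> (\<Sum>e\<in>UNIV. P$e) = mat 1}"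

definition conv_boundary :: "'a::real_vector set \<Rightarrow> 'a set" where
  "conv_boundary C = {p\<in>C. \<exists>q\<in>C. \<forall>\<epsilon>::real. 0 < \<epsilon> \<and> \<epsilon> \<le> 1 \<longrightarrow>
       p + \<epsilon> *\<^sub>R (q - p) \<in> C \<and> p - \<epsilon> *\<^sub>R (q - p) \<notin> C}"

definition cscale :: "complex \<Rightarrow> ('n::finite) op \<Rightarrow> ('n::finite) op" where
  "cscale c A = (\<chi> i j. c * A$i$j)"

interpretation opc: vector_space "cscale :: complex \<Rightarrow> ('n::finite) op \<Rightarrow> ('n::finite) op"
  by unfold_locales (auto simp: cscale_def vec_eq_iff algebra_simps)

definition face_dirs :: "(('n::finite) op)^('e::finite) \<Rightarrow> ((('n::finite) op)^('e::finite)) set" where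
  "face_dirs P = {D. (\<forall>e. hermitian_op (D$e)) \<and>
       (\<exists>\<epsilon>::real. 0 < \<epsilon> \<and> P + \<epsilon> *\<^sub>R D \<in> POVMs \<and> P - \<epsilon> *\<^sub>R D \<in> POVMs)}"

definition eig_basis :: "(('n::finite) op)^('e::finite) \<Rightarrow> ('e \<Rightarrow> nat \<Rightarrow> complex^('n::finite)) \<Rightarrow> bool" where
  "eig_basis P v \<longleftrightarrow> (\<forall>e. (\<forall>m<rank (P$e). \<forall>n<rank (P$e).
        cinner (v e m) (v e n) = (if m = n then 1 else 0)) \<and>
      (\<forall>n<rank (P$e). \<exists>c. c \<noteq> 0 \<and> (P$e) *v (v e n) = c *s (v e n)))"

definition r_num :: "(('n::finite) op)^('e::finite) \<Rightarrow> nat" where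
  "r_num P = (\<Sum>e\<in>UNIV. rank (P$e) ^ 2)"

definition l_num :: "(('n::finite) op)^('e::finite) \<Rightarrow> ('e \<Rightarrow> nat \<Rightarrow> complex^('n::finite)) \<Rightarrow> nat" where
  "l_num P v = opc.dim {outer (v e m) (v e n) | e m n. m < rank (P$e) \<and> n < rank (P$e)}"

definition b_num :: "(('n::finite) op)^('e::finite) \<Rightarrow> ('e \<Rightarrow> nat \<Rightarrow> complex^('n::finite)) \<Rightarrow> int" where
  "b_num P v = int (r_num P) - int (l_num P v)"

end

theory Submission
  imports Defs
begin


lemma cinner_add_right: "cinner x (y + z) = cinner x y + cinner x z"
  by (simp add: cinner_def algebra_simps sum.distrib)
lemma cinner_add_left: "cinner (x + y) z = cinner x z + cinner y z"
  by (simp add: cinner_def algebra_simps sum.distrib)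
lemma cinner_diff_right: "cinner x (y - z) = cinner x y - cinner x z"
  by (simp add: cinner_def algebra_simps sum_subtractf)
lemma cinner_diff_left: "cinner (x - y) z = cinner x z - cinner y z"
  by (simp add: cinner_def algebra_simps sum_subtractf)
lemma cinner_minus_left: "cinner (- x) z = - cinner x z"
  by (simp add: cinner_def sum_negf)
lemma cinner_minus_right: "cinner x (- z) = - cinner x z"
  by (simp add: cinner_def sum_negf)
lemma cinner_scale_right: "cinner x (c *s y) = c * cinner x y"
  by (simp add: cinner_def sum_distrib_left algebra_simps)
lemma cinner_scale_left: "cinner (c *s x) y = cnj c * cinner x y"
  by (simp add: cinner_def sum_distrib_left algebra_simps)
lemma comp_scaleR: "(r *\<^sub>R y)$i = complex_of_real r * (y$i)"
  unfolding vector_scaleR_component by (simp add: scaleR_conv_of_real)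
lemma comp_scaleR2: "(r *\<^sub>R (A::'n::finite op))$i$j = complex_of_real r * (A$i$j)"
  unfolding vector_scaleR_component by (simp add: scaleR_conv_of_real)
lemma cinner_scaleR_right: "cinner x (r *\<^sub>R y) = of_real r * cinner x y"
  by (simp only: cinner_def comp_scaleR sum_distrib_left) (simp add: algebra_simps)
lemma cinner_scaleR_left: "cinner (r *\<^sub>R x) y = of_real r * cinner x y"
  by (simp only: cinner_def comp_scaleR sum_distrib_left) (simp add: algebra_simps)
lemma cinner_zero_left[simp]: "cinner 0 y = 0" by (simp add: cinner_def)
lemma cinner_zero_right[simp]: "cinner x 0 = 0" by (simp add: cinner_def)
lemma cinner_sum_right: "cinner x (sum f S) = (\<Sum>i\<in>S. cinner x (f i))"
  unfolding cinner_def sum_component sum_distrib_left by (rule sum.swap)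
lemma cinner_sum_left: "cinner (sum f S) y = (\<Sum>i\<in>S. cinner (f i) y)"
  unfolding cinner_def sum_component cnj_sum sum_distrib_right by (rule sum.swap)
lemma cinner_cnj: "cnj (cinner x y) = cinner y x"
  by (simp add: cinner_def mult.commute)
lemma cinner_self: "cinner x x = of_real (\<Sum>i\<in>UNIV. (cmod (x$i))^2)"
  unfolding cinner_def of_real_sum by (rule sum.cong[OF refl]) (metis complex_norm_square mult.commute)
lemma cinner_self_eq0: "cinner x x = 0 \<longleftrightarrow> x = 0"
proof
  assume "cinner x x = 0"
  then have "(\<Sum>i\<in>UNIV. (cmod (x$i))^2) = 0" unfolding cinner_self of_real_eq_0_iff .
  then have "\<forall>i\<in>UNIV. (cmod (x$i))^2 = 0" by (subst (asm) sum_nonneg_eq_0_iff) auto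
  then show "x = 0" by (simp add: vec_eq_iff)
qed simp

lemma mv_add: "A *v (x + y) = A *v x + A *v y"
  by (simp add: matrix_vector_mult_def vec_eq_iff algebra_simps sum.distrib)
lemma mv_scale: "(A::'n::finite op) *v (c *s x) = c *s (A *v x)"
  unfolding matrix_vector_mult_def vec_eq_iff by (auto simp: sum_distrib_left algebra_simps intro!: sum.cong)
lemma mv_minus: "(A::'n::finite op) *v (- x) = - (A *v x)"
  unfolding matrix_vector_mult_def vec_eq_iff by (auto simp: sum_negf[symmetric] intro!: sum.cong)
lemma mv_sum: "A *v (sum f S) = (\<Sum>i\<in>S. A *v f i)"
  by (simp add: matrix_vector_mult_def vec_eq_iff sum_distrib_left; subst sum.swap; simp)
lemma mv_sum_left: "(sum f S) *v x = (\<Sum>i\<in>S. f i *v x)"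
  unfolding vec_eq_iff matrix_vector_mult_def sum_component vec_lambda_beta sum_distrib_right
  by (auto intro: sum.swap)
lemma cscale_mv: "cscale c A *v x = c *s (A *v x)"
  by (simp add: cscale_def matrix_vector_mult_def vec_eq_iff sum_distrib_left algebra_simps)
lemma outer_mv: "outer a b *v x = cinner b x *s a"
  by (simp add: outer_def cinner_def matrix_vector_mult_def vec_eq_iff sum_distrib_left algebra_simps)

lemma mat1_mv: "mat 1 *v x = x"
  by (simp add: matrix_vector_mul_lid)

lemma cinner_adj: "cinner x (A *v y) = cinner (cadj A *v x) y"
proof -
  have "cinner x (A *v y) = (\<Sum>i\<in>UNIV. \<Sum>j\<in>UNIV. cnj (x$i) * A$i$j * y$j)"
    by (simp add: cinner_def matrix_vector_mult_def sum_distrib_left mult.assoc)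
  also have "\<dots> = (\<Sum>j\<in>UNIV. \<Sum>i\<in>UNIV. cnj (x$i) * A$i$j * y$j)"
    by (rule sum.swap)
  also have "\<dots> = cinner (cadj A *v x) y"
    by (simp add: cinner_def cadj_def matrix_vector_mult_def sum_distrib_left cnj_sum mult_ac)
  finally show ?thesis .
qed
lemma herm_cinner: "hermitian_op A \<Longrightarrow> cinner x (A *v y) = cinner (A *v x) y"
  by (metis cinner_adj hermitian_op_def)
lemma herm_real: "hermitian_op A \<Longrightarrow> cnj (cinner x (A *v x)) = cinner x (A *v x)"
  by (metis cinner_cnj herm_cinner)

lemma cadj_add: "cadj (A + B) = cadj A + cadj B" by (simp add: cadj_def vec_eq_iff)
lemma cadj_diff: "cadj (A - B) = cadj A - cadj B" by (simp add: cadj_def vec_eq_iff)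
lemma cadj_minus: "cadj (- A) = - cadj A" by (simp add: cadj_def vec_eq_iff)
lemma cadj_zero[simp]: "cadj 0 = 0" by (simp add: cadj_def vec_eq_iff)
lemma cadj_cscale: "cadj (cscale c A) = cscale (cnj c) (cadj A)" by (simp add: cadj_def cscale_def vec_eq_iff)
lemma cadj_scaleR: "cadj (r *\<^sub>R A) = r *\<^sub>R cadj A"
  by (simp only: cadj_def vec_eq_iff comp_scaleR2 vec_lambda_beta) simp
lemma cadj_cadj[simp]: "cadj (cadj A) = A" by (simp add: cadj_def vec_eq_iff)
lemma cadj_outer: "cadj (outer a b) = outer b a" by (simp add: cadj_def outer_def vec_eq_iff)
lemma cadj_sum: "cadj (sum f S) = (\<Sum>i\<in>S. cadj (f i))"
  by (simp add: cadj_def vec_eq_iff sum_component)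
lemma cadj_mat1: "cadj (mat 1) = mat 1" by (simp add: cadj_def mat_def vec_eq_iff)
lemma scaleR_cscale: "r *\<^sub>R A = cscale (of_real r) A"
  by (simp only: cscale_def vec_eq_iff comp_scaleR2 vec_lambda_beta) simp
lemma cscale_add: "cscale c (A + B) = cscale c A + cscale c B" by (simp add: cscale_def vec_eq_iff algebra_simps)
lemma cscale_add2: "cscale (c + d) A = cscale c A + cscale d A" by (simp add: cscale_def vec_eq_iff algebra_simps)
lemma cscale_cscale: "cscale c (cscale d A) = cscale (c*d) A" by (simp add: cscale_def vec_eq_iff algebra_simps)
lemma cscale_one[simp]: "cscale 1 A = A" by (simp add: cscale_def vec_eq_iff)

lemma herm_add: "hermitian_op A \<Longrightarrow> hermitian_op B \<Longrightarrow> hermitian_op (A + B)"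
  by (simp add: hermitian_op_def cadj_add)
lemma herm_diff: "hermitian_op A \<Longrightarrow> hermitian_op B \<Longrightarrow> hermitian_op (A - B)"
  by (simp add: hermitian_op_def cadj_diff)
lemma herm_scaleR: "hermitian_op A \<Longrightarrow> hermitian_op (r *\<^sub>R A)"
  by (simp add: hermitian_op_def cadj_scaleR)
lemma herm_zero: "hermitian_op 0" by (simp add: hermitian_op_def)
lemma herm_sum: "(\<And>i. i \<in> S \<Longrightarrow> hermitian_op (f i)) \<Longrightarrow> hermitian_op (sum f S)"
  by (simp add: hermitian_op_def cadj_sum)

lemma mat_eqI: "(\<And>x. A *v x = B *v x) \<Longrightarrow> (A::'n::finite op) = B"
  using matrix_eq by blast
lemma scaleR_vec: "r *\<^sub>R (y::complex^'n::finite) = complex_of_real r *s y"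
  by (simp only: vec_eq_iff comp_scaleR vector_smult_component) simp
lemma scaleR_mv: "(r *\<^sub>R (A::'n::finite op)) *v x = r *\<^sub>R (A *v x)"
  by (simp only: scaleR_cscale cscale_mv scaleR_vec)


definition orthonormal :: "'i set \<Rightarrow> ('i \<Rightarrow> complex^'n::finite) \<Rightarrow> bool" where
  "orthonormal I u \<longleftrightarrow> (\<forall>m\<in>I. \<forall>n\<in>I. cinner (u m) (u n) = (if m = n then 1 else 0))"

definition proj :: "'i set \<Rightarrow> ('i \<Rightarrow> complex^'n::finite) \<Rightarrow> complex^'n \<Rightarrow> complex^'n" where
  "proj I u x = (\<Sum>m\<in>I. cinner (u m) x *s u m)"

lemma delta_sum: "finite I \<Longrightarrow> m \<in> I \<Longrightarrow> (\<Sum>n\<in>I. f n * (if m = n then 1 else 0)) = (f m :: complex)"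
proof -
  assume "finite I" "m \<in> I"
  have "(\<Sum>n\<in>I. f n * (if m = n then 1 else 0)) = (\<Sum>n\<in>I. if m = n then f n else 0)"
    by (rule sum.cong) auto
  also have "\<dots> = f m" using \<open>finite I\<close> \<open>m \<in> I\<close> by simp
  finally show ?thesis .
qed

lemma combo_inner:
  assumes "orthonormal I u" "finite I"
  shows "cinner (\<Sum>m\<in>I. a m *s u m) (\<Sum>n\<in>I. b n *s u n) = (\<Sum>m\<in>I. cnj (a m) * b m)"
proof -
  have "cinner (\<Sum>m\<in>I. a m *s u m) (\<Sum>n\<in>I. b n *s u n)
      = (\<Sum>m\<in>I. cnj (a m) * cinner (u m) (\<Sum>n\<in>I. b n *s u n))"
    by (simp add: cinner_sum_left cinner_scale_left)
  also have "\<dots> = (\<Sum>m\<in>I. cnj (a m) * (\<Sum>n\<in>I. b n * cinner (u m) (u n)))"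
    by (simp add: cinner_sum_right cinner_scale_right)
  also have "\<dots> = (\<Sum>m\<in>I. cnj (a m) * b m)"
  proof (rule sum.cong[OF refl])
    fix m assume m: "m \<in> I"
    have "(\<Sum>n\<in>I. b n * cinner (u m) (u n)) = (\<Sum>n\<in>I. b n * (if m = n then 1 else 0))"
      using assms(1) m unfolding orthonormal_def by (intro sum.cong) auto
    also have "\<dots> = b m" using delta_sum[OF assms(2) m] .
    finally show "cnj (a m) * (\<Sum>n\<in>I. b n * cinner (u m) (u n)) = cnj (a m) * b m" by simp
  qed
  finally show ?thesis .
qed

lemma combo_inner_basis:
  assumes "orthonormal I u" "finite I" "j \<in> I"
  shows "cinner (u j) (\<Sum>n\<in>I. b n *s u n) = b j"
proof -
  have "cinner (u j) (\<Sum>n\<in>I. b n *s u n) = (\<Sum>n\<in>I. b n * cinner (u j) (u n))"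
    by (simp add: cinner_sum_right cinner_scale_right)
  also have "\<dots> = (\<Sum>n\<in>I. b n * (if j = n then 1 else 0))"
    using assms unfolding orthonormal_def by (intro sum.cong) auto
  also have "\<dots> = b j" using delta_sum[OF assms(2,3)] .
  finally show ?thesis .
qed

lemma proj_perp:
  assumes "orthonormal I u" "finite I" "j \<in> I"
  shows "cinner (u j) (x - proj I u x) = 0"
  using combo_inner_basis[OF assms, of "\<lambda>m. cinner (u m) x"]
  by (simp add: proj_def cinner_diff_right)

lemma perp_combo:
  assumes "\<forall>j\<in>I. cinner (u j) z = 0"
  shows "cinner z (\<Sum>m\<in>I. a m *s u m) = 0" "cinner (\<Sum>m\<in>I. a m *s u m) z = 0"
proof -
  have "\<forall>j\<in>I. cinner z (u j) = 0" using assms by (metis cinner_cnj complex_cnj_zero)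
  then show "cinner z (\<Sum>m\<in>I. a m *s u m) = 0"
    by (simp add: cinner_sum_right cinner_scale_right)
  show "cinner (\<Sum>m\<in>I. a m *s u m) z = 0"
    using assms by (simp add: cinner_sum_left cinner_scale_left)
qed

lemma proj_norm:
  assumes "orthonormal I u" "finite I"
  shows "cinner (proj I u x) (proj I u x) = (\<Sum>m\<in>I. cnj (cinner (u m) x) * cinner (u m) x)"
  unfolding proj_def by (rule combo_inner[OF assms])

lemma psd_herm: "psd_op A \<Longrightarrow> hermitian_op A" by (simp add: psd_op_def)

lemma cinner_self_ge0: "0 \<le> Re (cinner x x)"
  by (simp add: cinner_self sum_nonneg)

lemma cinner_self_real: "cinner x x = of_real (Re (cinner x x))"
  by (simp add: cinner_self)

lemma psd_kernel:
  assumes B: "psd_op B" and z: "cinner z (B *v z) = 0"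
  shows "B *v z = 0"
proof -
  define y where "y = B *v z"
  have hB: "hermitian_op B" using B psd_herm by blast
  define a where "a = Re (cinner y y)"
  define b where "b = Re (cinner y (B *v y))"
  have a0: "a \<ge> 0" unfolding a_def by (rule cinner_self_ge0)
  have b0: "b \<ge> 0" using B unfolding b_def psd_op_def by blast
  have key: "0 \<le> 2 * t * a + t^2 * b" for t :: real
  proof -
    have "0 \<le> Re (cinner (z + complex_of_real t *s y) (B *v (z + complex_of_real t *s y)))"
      using B unfolding psd_op_def by blast
    also have "cinner (z + complex_of_real t *s y) (B *v (z + complex_of_real t *s y))
       = cinner z (B *v z) + of_real t * cinner z (B *v y) + of_real t * cinner y (B *v z)
         + of_real t * of_real t * cinner y (B *v y)"
      by (simp add: mv_add mv_scale cinner_add_left cinner_add_right cinner_scale_left cinner_scale_right algebra_simps)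
    also have "cinner z (B *v y) = cinner y y"
      using herm_cinner[OF hB, of z y] y_def by simp
    also have "cinner y (B *v z) = cinner y y" using y_def by simp
    finally show ?thesis using z by (simp add: a_def b_def power2_eq_square algebra_simps)
  qed
  have "a = 0"
  proof (rule ccontr)
    assume "a \<noteq> 0"
    then have ap: "a > 0" using a0 by simp
    define t where "t = - a / (b + 1)"
    have bp: "b + 1 \<noteq> 0" using b0 by simp
    have ht: "(b+1) * t = -a" using bp by (simp add: t_def)
    have k0: "0 \<le> 2 * t * a + t^2 * b" by (rule key)
    have "0 \<le> (b+1)^2 * (2 * t * a + t^2 * b)" using k0 by simp
    also have "(b+1)^2 * (2 * t * a + t^2 * b) = 2*a*(b+1)*((b+1)*t) + b*((b+1)*t)^2"
      by (simp add: algebra_simps power2_eq_square)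
    also have "\<dots> = - (a^2 * (b+2))" unfolding ht by (simp add: algebra_simps power2_eq_square)
    finally have "a^2 * (b+2) \<le> 0" by simp
    moreover have "a^2 * (b+2) > 0" using ap b0 by simp
    ultimately show False by simp
  qed
  then have "cinner y y = 0" using cinner_self_real[of y] a_def by simp
  then show ?thesis using cinner_self_eq0 y_def by blast
qed

lemma Re_cinner_bound:
  fixes D :: "'n::finite op"
  shows "cmod (cinner x (D *v x)) \<le> (\<Sum>i\<in>UNIV. \<Sum>j\<in>UNIV. cmod (D$i$j)) * Re (cinner x x)"
proof -
  define S where "S = (\<Sum>k\<in>UNIV. (cmod (x$k))^2)"
  have Sx: "Re (cinner x x) = S" by (simp add: cinner_self S_def)
  have le: "cmod (x$i) * cmod (x$j) \<le> S" for i j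
  proof -
    have "cmod (x$i) * cmod (x$j) \<le> ((cmod (x$i))^2 + (cmod (x$j))^2) / 2"
      using sum_squares_bound[of "cmod (x$i)" "cmod (x$j)"] by (simp add: power2_eq_square field_simps)
    also have "(cmod (x$i))^2 \<le> S" unfolding S_def
      by (rule member_le_sum[where f = "\<lambda>k. (cmod (x$k))^2"]) auto
    moreover have "(cmod (x$j))^2 \<le> S" unfolding S_def
      by (rule member_le_sum[where f = "\<lambda>k. (cmod (x$k))^2"]) auto
    ultimately show ?thesis by simp
  qed
  have eq: "cinner x (D *v x) = (\<Sum>i\<in>UNIV. \<Sum>j\<in>UNIV. cnj (x$i) * D$i$j * x$j)"
    by (simp add: cinner_def matrix_vector_mult_def sum_distrib_left mult.assoc)
  have "cmod (cinner x (D *v x)) = cmod (\<Sum>i\<in>UNIV. \<Sum>j\<in>UNIV. cnj (x$i) * D$i$j * x$j)"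
    unfolding eq ..
  also have "\<dots> \<le> (\<Sum>i\<in>UNIV. cmod (\<Sum>j\<in>UNIV. cnj (x$i) * D$i$j * x$j))"
    by (rule norm_sum)
  also have "\<dots> \<le> (\<Sum>i\<in>UNIV. \<Sum>j\<in>UNIV. cmod (cnj (x$i) * D$i$j * x$j))"
    by (intro sum_mono norm_sum)
  also have "\<dots> \<le> (\<Sum>i\<in>UNIV. \<Sum>j\<in>UNIV. cmod (D$i$j) * S)"
  proof (intro sum_mono)
    fix i j
    have "cmod (cnj (x$i) * D$i$j * x$j) = cmod (D$i$j) * (cmod (x$i) * cmod (x$j))"
      by (simp add: norm_mult)
    also have "\<dots> \<le> cmod (D$i$j) * S" using le by (intro mult_left_mono) auto
    finally show "cmod (cnj (x$i) * D$i$j * x$j) \<le> cmod (D$i$j) * S" .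
  qed
  also have "\<dots> = (\<Sum>i\<in>UNIV. \<Sum>j\<in>UNIV. cmod (D$i$j)) * Re (cinner x x)"
    by (simp add: Sx sum_distrib_right)
  finally show ?thesis .
qed


definition G :: "'i set \<Rightarrow> ('i \<Rightarrow> complex^'n::finite) \<Rightarrow> 'n op set" where
  "G I u = {outer (u m) (u n) | m n. m \<in> I \<and> n \<in> I}"

lemma eig_lower:
  assumes A: "psd_op A" and on: "orthonormal I u" and fI: "finite I"
    and eig: "\<forall>n\<in>I. \<exists>c. c \<noteq> 0 \<and> A *v u n = c *s u n"
  shows "\<exists>c>0. \<forall>x. c * Re (cinner (proj I u x) (proj I u x)) \<le> Re (cinner x (A *v x))"
proof -
  define lam where "lam n = cinner (u n) (A *v u n)" for n
  have hA: "hermitian_op A" using A psd_herm by blast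
  have Au: "A *v u n = lam n *s u n" and lamnz: "lam n \<noteq> 0" if n: "n \<in> I" for n
  proof -
    obtain c where c: "c \<noteq> 0" "A *v u n = c *s u n" using eig n by blast
    have "cinner (u n) (u n) = 1" using on n unfolding orthonormal_def by auto
    then have "lam n = c" unfolding lam_def using c by (simp add: cinner_scale_right)
    then show "A *v u n = lam n *s u n" "lam n \<noteq> 0" using c by auto
  qed
  have lamreal: "lam n = of_real (Re (lam n))" for n
  proof -
    have "cnj (lam n) = lam n" unfolding lam_def by (rule herm_real[OF hA])
    then have "Im (lam n) = 0" by (metis cnj.simps(2) complex.expand neg_equal_zero cnj.simps(1))
    then show ?thesis by (simp add: complex_eq_iff)
  qed
  have lampos: "Re (lam n) > 0" if "n \<in> I" for n
  proof -
    have "Re (lam n) \<ge> 0" using A unfolding psd_op_def lam_def by blast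
    moreover have "Re (lam n) \<noteq> 0" using lamnz[OF that] lamreal[of n] by auto
    ultimately show ?thesis by simp
  qed
  define c0 where "c0 = Min (insert 1 ((\<lambda>n. Re (lam n)) ` I))"
  have c0pos: "c0 > 0" unfolding c0_def using fI lampos by (subst Min_gr_iff) auto
  have c0le: "c0 \<le> Re (lam n)" if "n \<in> I" for n
    unfolding c0_def using fI that by (intro Min_le) auto
  have "c0 * Re (cinner (proj I u x) (proj I u x)) \<le> Re (cinner x (A *v x))" for x
  proof -
    define a where "a m = cinner (u m) x" for m
    define p where "p = proj I u x"
    define z where "z = x - p"
    have p_def': "p = (\<Sum>m\<in>I. a m *s u m)" unfolding p_def proj_def a_def ..
    have zperp: "\<forall>j\<in>I. cinner (u j) z = 0" unfolding z_def p_def using proj_perp[OF on fI] by blast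
    have Ap: "A *v p = (\<Sum>m\<in>I. (a m * lam m) *s u m)"
      unfolding p_def' mv_sum mv_scale by (rule sum.cong) (auto simp: Au)
    have x: "x = p + z" unfolding z_def by simp
    have "cinner x (A *v x) = cinner p (A *v p) + cinner p (A *v z) + cinner z (A *v p) + cinner z (A *v z)"
      unfolding x by (simp add: mv_add cinner_add_left cinner_add_right)
    also have "cinner z (A *v p) = 0" unfolding Ap by (rule perp_combo(1)[OF zperp])
    also have "cinner p (A *v z) = 0" unfolding herm_cinner[OF hA] Ap by (rule perp_combo(2)[OF zperp])
    also have "cinner p (A *v p) = (\<Sum>m\<in>I. cnj (a m) * (a m * lam m))"
      by (subst Ap, subst p_def', rule combo_inner[OF on fI])
    finally have eq: "cinner x (A *v x) = (\<Sum>m\<in>I. cnj (a m) * (a m * lam m)) + cinner z (A *v z)" by simp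
    have hterm: "cnj (a m) * (a m * lam m) = of_real ((cmod (a m))^2 * Re (lam m))" for m
      by (subst lamreal) (metis complex_norm_square mult.assoc mult.commute of_real_mult)
    have Rez: "Re (cinner z (A *v z)) \<ge> 0" using A unfolding psd_op_def by blast
    have "Re (cinner x (A *v x)) \<ge> (\<Sum>m\<in>I. (cmod (a m))^2 * Re (lam m))"
      using Rez unfolding eq by (simp add: hterm)
    moreover have "(\<Sum>m\<in>I. (cmod (a m))^2 * Re (lam m)) \<ge> (\<Sum>m\<in>I. (cmod (a m))^2 * c0)"
      by (intro sum_mono mult_left_mono c0le) auto
    moreover have R: "Re (cinner p p) = (\<Sum>m\<in>I. (cmod (a m))^2)"
      unfolding p_def' combo_inner[OF on fI]
      by (simp add: complex_norm_square[symmetric] mult.commute)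
    moreover have "c0 * (\<Sum>m\<in>I. (cmod (a m))^2) = (\<Sum>m\<in>I. (cmod (a m))^2 * c0)"
      by (simp add: sum_distrib_left mult.commute)
    ultimately show ?thesis unfolding p_def[symmetric] R by linarith
  qed
  then show ?thesis using c0pos by blast
qed

lemma span_kills:
  assumes X: "X \<in> opc.span (G I u)" and z: "\<forall>j\<in>I. cinner (u j) z = 0"
  shows "X *v z = 0"
  using X
proof (induction rule: opc.span_induct_alt)
  case base then show ?case by simp
next
  case (step c x y)
  then obtain m n where "x = outer (u m) (u n)" "n \<in> I" unfolding G_def by blast
  then have "x *v z = 0" using z by (simp add: outer_mv)
  then show ?case using step by (simp add: matrix_vector_mult_add_rdistrib cscale_mv)
qed

lemma span_herm_exists:
  assumes A: "psd_op A" and on: "orthonormal I u" and fI: "finite I"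
    and eig: "\<forall>n\<in>I. \<exists>c. c \<noteq> 0 \<and> A *v u n = c *s u n"
    and D: "D \<in> opc.span (G I u)" and hD: "hermitian_op D"
  shows "\<exists>\<epsilon>>0. \<forall>\<delta>. \<bar>\<delta>\<bar> \<le> \<epsilon> \<longrightarrow> psd_op (A + \<delta> *\<^sub>R D)"
proof -
  obtain c0 where c0: "c0 > 0" "\<forall>x. c0 * Re (cinner (proj I u x) (proj I u x)) \<le> Re (cinner x (A *v x))"
    using eig_lower[OF A on fI eig] by blast
  define M where "M = (\<Sum>i\<in>UNIV. \<Sum>j\<in>UNIV. cmod (D$i$j))"
  have M0: "M \<ge> 0" unfolding M_def by (intro sum_nonneg) auto
  define \<epsilon> where "\<epsilon> = c0 / (M + 1)"
  have epos: "\<epsilon> > 0" unfolding \<epsilon>_def using c0 M0 by simp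
  have "psd_op (A + \<delta> *\<^sub>R D)" if d: "\<bar>\<delta>\<bar> \<le> \<epsilon>" for \<delta>
  proof -
    have herm: "hermitian_op (A + \<delta> *\<^sub>R D)"
      using herm_add[OF psd_herm[OF A] herm_scaleR[OF hD]] .
    have "0 \<le> Re (cinner x ((A + \<delta> *\<^sub>R D) *v x))" for x
    proof -
      define p where "p = proj I u x"
      define z where "z = x - p"
      have zperp: "\<forall>j\<in>I. cinner (u j) z = 0" unfolding z_def p_def using proj_perp[OF on fI] by blast
      have Dz: "D *v z = 0" by (rule span_kills[OF D zperp])
      have x: "x = p + z" unfolding z_def by simp
      have "cinner x (D *v x) = cinner p (D *v p) + cinner z (D *v p)"
        unfolding x by (simp add: mv_add Dz cinner_add_left)
      also have "cinner z (D *v p) = 0" unfolding herm_cinner[OF hD] Dz by simp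
      finally have Dx: "cinner x (D *v x) = cinner p (D *v p)" by simp
      define N where "N = Re (cinner p p)"
      have N0: "N \<ge> 0" unfolding N_def by (rule cinner_self_ge0)
      have "\<bar>Re (cinner x (D *v x))\<bar> \<le> M * N"
        unfolding Dx M_def N_def using Re_cinner_bound[of p D] abs_Re_le_cmod order_trans by blast
      then have "\<bar>\<delta> * Re (cinner x (D *v x))\<bar> \<le> \<bar>\<delta>\<bar> * (M * N)"
        by (simp add: abs_mult mult_left_mono)
      also have "\<bar>\<delta>\<bar> * (M * N) \<le> \<epsilon> * (M * N)" using d M0 N0 by (intro mult_right_mono) auto
      also have "\<epsilon> * (M * N) \<le> c0 * N"
      proof -
        have "\<epsilon> * M \<le> c0" unfolding \<epsilon>_def using c0 M0 by (simp add: field_simps)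
        then show ?thesis using N0 by (metis mult.assoc mult_right_mono)
      qed
      finally have "- (\<delta> * Re (cinner x (D *v x))) \<le> c0 * N" by simp
      moreover have "c0 * N \<le> Re (cinner x (A *v x))" using c0(2) unfolding N_def p_def by blast
      moreover have "cinner x ((A + \<delta> *\<^sub>R D) *v x) = cinner x (A *v x) + of_real \<delta> * cinner x (D *v x)"
        by (simp add: matrix_vector_mult_add_rdistrib scaleR_mv cinner_add_right cinner_scaleR_right)
      ultimately show ?thesis by simp
    qed
    then show ?thesis using herm unfolding psd_op_def by blast
  qed
  then show ?thesis using epos by blast
qed


lemma perp_kernel:
  fixes A :: "'n::finite op"
  assumes hA: "hermitian_op A" and on: "orthonormal {..<rank A} u"
    and eig: "\<forall>n<rank A. \<exists>c. c \<noteq> 0 \<and> A *v u n = c *s u n"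
    and z: "\<forall>j<rank A. cinner (u j) z = 0"
  shows "A *v z = 0"
proof -
  define k where "k = rank A"
  define I where "I = {..<k}"
  define cv where "cv n = (\<chi> i. cnj (u n $ i))" for n
  define bd where "bd y w = (\<Sum>i\<in>UNIV. y$i * w$i)" for y w :: "complex^'n"
  have bd_cv: "bd (cv m) w = cinner (u m) w" for m w
    by (simp add: bd_def cv_def cinner_def)
  have row_bd: "(A *v w)$j = bd (row j A) w" for j w
    by (simp add: bd_def row_def matrix_vector_mult_def)
  have Aji: "A$j$i = cnj (A$i$j)" for i j
    using hA unfolding hermitian_op_def cadj_def by (metis vec_lambda_beta)
  have cv_in: "cv n \<in> vec.span (rows A)" if n: "n \<in> I" for n
  proof -
    obtain c where c: "c \<noteq> 0" "A *v u n = c *s u n" using eig n unfolding I_def k_def by blast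
    define w where "w = inverse c *s u n"
    have Aw: "A *v w = u n" unfolding w_def mv_scale c(2) using c(1) by (simp add: vector_smult_assoc)
    have "cv n = (\<Sum>j\<in>UNIV. cnj (w$j) *s row j A)"
    proof (subst vec_eq_iff, intro allI)
      fix i
      have "cv n $ i = cnj ((A *v w)$i)" unfolding Aw cv_def by simp
      also have "\<dots> = (\<Sum>j\<in>UNIV. cnj (A$i$j) * cnj (w$j))"
        by (simp add: matrix_vector_mult_def)
      also have "\<dots> = (\<Sum>j\<in>UNIV. cnj (w$j) * A$j$i)"
        by (rule sum.cong[OF refl]) (simp add: Aji[of i] mult.commute)
      also have "\<dots> = (\<Sum>j\<in>UNIV. cnj (w$j) *s row j A) $ i"
        by (simp add: sum_component row_def)
      finally show "cv n $ i = (\<Sum>j\<in>UNIV. cnj (w$j) *s row j A) $ i" .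
    qed
    also have "\<dots> \<in> vec.span (rows A)"
      by (intro vec.span_sum vec.span_scale vec.span_base) (auto simp: rows_def)
    finally show ?thesis .
  qed
  have uu: "cinner (u m) (u n) = (if m = n then 1 else 0)" if "m \<in> I" "n \<in> I" for m n
    using on that unfolding orthonormal_def I_def k_def by blast
  have inj: "inj_on cv I"
  proof (rule inj_onI)
    fix m n assume mn: "m \<in> I" "n \<in> I" "cv m = cv n"
    then have "u m = u n" unfolding cv_def by (simp add: vec_eq_iff)
    then have "cinner (u m) (u n) = 1" using uu[OF mn(1) mn(1)] by simp
    then show "m = n" using uu[OF mn(1,2)] by (auto split: if_splits)
  qed
  have fI: "finite I" unfolding I_def by simp
  have indep: "vec.independent (cv ` I)"
    unfolding vec.independent_explicit
  proof (intro conjI allI impI ballI)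
    show "finite (cv ` I)" using fI by simp
    fix d y
    assume sum0: "(\<Sum>v\<in>cv ` I. d v *s v) = 0" and y: "y \<in> cv ` I"
    then obtain n where n: "n \<in> I" "y = cv n" by blast
    have "(\<Sum>m\<in>I. d (cv m) *s cv m) = 0" using sum0 by (simp add: sum.reindex[OF inj])
    then have "0 = bd (\<Sum>m\<in>I. d (cv m) *s cv m) (u n)" by (simp add: bd_def)
    also have "\<dots> = (\<Sum>m\<in>I. d (cv m) * bd (cv m) (u n))"
      unfolding bd_def by (simp add: sum_component sum_distrib_left sum_distrib_right mult.assoc; rule sum.swap)
    also have "\<dots> = (\<Sum>m\<in>I. d (cv m) * (if n = m then 1 else 0))"
      by (intro sum.cong refl) (simp add: bd_cv uu[OF _ n(1)] eq_commute)
    also have "\<dots> = d (cv n)" by (rule delta_sum[OF fI n(1)])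
    finally show "d y = 0" using n by simp
  qed
  have card: "card (cv ` I) = k" using card_image[OF inj] unfolding I_def by simp
  have sub: "cv ` I \<subseteq> vec.span (rows A)" using cv_in by blast
  have "vec.span (rows A) \<subseteq> vec.span (cv ` I)"
    by (rule vec.card_ge_dim_independent[OF sub indep]) (simp add: card k_def row_rank_def_gen)
  moreover have "bd y z = 0" if "y \<in> vec.span (cv ` I)" for y
    using that
  proof (induction rule: vec.span_induct_alt)
    case base then show ?case by (simp add: bd_def)
  next
    case (step c x y)
    then obtain m where m: "m \<in> I" "x = cv m" by blast
    have "bd x z = 0" using m z bd_cv unfolding I_def k_def by auto
    then show ?case using step by (simp add: bd_def sum.distrib algebra_simps sum_distrib_left[symmetric])
  qed
  ultimately have "bd (row j A) z = 0" for j
  proof -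
    assume h1: "vec.span (rows A) \<subseteq> vec.span (cv ` I)" and h2: "\<And>y. y \<in> vec.span (cv ` I) \<Longrightarrow> bd y z = 0"
    have "row j A \<in> vec.span (rows A)" by (rule vec.span_base) (auto simp: rows_def)
    then show ?thesis using h1 h2 by blast
  qed
  then show ?thesis by (simp add: vec_eq_iff row_bd)
qed

lemma herm_face_kill:
  assumes A: "psd_op A" and hD: "hermitian_op D" and e: "\<epsilon> > 0"
    and p1: "psd_op (A + \<epsilon> *\<^sub>R D)" and p2: "psd_op (A - \<epsilon> *\<^sub>R D)" and Az: "A *v z = 0"
  shows "D *v z = 0"
proof -
  define q where "q = cinner z (D *v z)"
  have e1: "cinner z ((A + \<epsilon> *\<^sub>R D) *v z) = of_real \<epsilon> * q"
    by (simp add: q_def matrix_vector_mult_add_rdistrib scaleR_mv cinner_add_right cinner_scaleR_right Az)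
  have e2: "cinner z ((A - \<epsilon> *\<^sub>R D) *v z) = - (of_real \<epsilon> * q)"
    by (simp add: q_def matrix_vector_mult_diff_rdistrib scaleR_mv cinner_diff_right cinner_minus_right cinner_scaleR_right Az)
  have "Re (of_real \<epsilon> * q) \<ge> 0" using p1 e1 unfolding psd_op_def by metis
  then have r1: "Re q \<ge> 0" using e by (simp add: zero_le_mult_iff)
  have "Re (- (of_real \<epsilon> * q)) \<ge> 0" using p2 e2 unfolding psd_op_def by metis
  then have r2: "Re q \<le> 0" using e by (simp add: mult_le_0_iff)
  have "cnj q = q" unfolding q_def by (rule herm_real[OF hD])
  then have "Im q = 0" by (metis cnj.simps(2) complex.expand neg_equal_zero cnj.simps(1))
  then have "q = 0" using r1 r2 by (simp add: complex_eq_iff)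
  then have "(A + \<epsilon> *\<^sub>R D) *v z = 0" using psd_kernel[OF p1] e1 by simp
  then have "\<epsilon> *\<^sub>R (D *v z) = 0" by (simp add: matrix_vector_mult_add_rdistrib scaleR_mv Az)
  then show ?thesis using e by simp
qed

lemma in_span:
  fixes D :: "'n::finite op"
  assumes on: "orthonormal I u" and fI: "finite I" and hD: "hermitian_op D"
    and kill: "\<And>z. (\<forall>j\<in>I. cinner (u j) z = 0) \<Longrightarrow> D *v z = 0"
  shows "D \<in> opc.span (G I u)"
proof -
  have Du: "D *v u n = proj I u (D *v u n)" if n: "n \<in> I" for n
  proof -
    define w where "w = D *v u n - proj I u (D *v u n)"
    have wperp: "\<forall>j\<in>I. cinner (u j) w = 0" unfolding w_def using proj_perp[OF on fI] by blast
    have Dw: "D *v w = 0" by (rule kill[OF wperp])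
    have "cinner w w = cinner w (D *v u n) - cinner w (proj I u (D *v u n))"
      by (metis cinner_diff_right w_def)
    also have "cinner w (proj I u (D *v u n)) = 0" unfolding proj_def by (rule perp_combo(1)[OF wperp])
    also have "cinner w (D *v u n) = 0" unfolding herm_cinner[OF hD] Dw by simp
    finally have ww: "cinner w w = 0" by simp
    have "w = 0" using ww cinner_self_eq0[of w] by simp
    then show ?thesis unfolding w_def by simp
  qed
  define R where "R = (\<Sum>n\<in>I. \<Sum>m\<in>I. cscale (cinner (u m) (D *v u n)) (outer (u m) (u n)))"
  have "D = R"
  proof (rule mat_eqI)
    fix x
    have "D *v (x - proj I u x) = 0" by (rule kill) (use proj_perp[OF on fI] in blast)
    then have "D *v x = D *v proj I u x" by (simp add: matrix_vector_mult_diff_distrib)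
    also have "\<dots> = (\<Sum>n\<in>I. cinner (u n) x *s (D *v u n))" unfolding proj_def by (simp add: mv_sum mv_scale)
    also have "\<dots> = (\<Sum>n\<in>I. \<Sum>m\<in>I. (cinner (u m) (D *v u n) * cinner (u n) x) *s u m)"
    proof (rule sum.cong[OF refl])
      fix n assume n: "n \<in> I"
      show "cinner (u n) x *s (D *v u n) = (\<Sum>m\<in>I. (cinner (u m) (D *v u n) * cinner (u n) x) *s u m)"
        by (subst Du[OF n]) (simp add: proj_def vec.scale_sum_right vector_smult_assoc mult.commute)
    qed
    also have "\<dots> = R *v x"
      by (simp add: R_def mv_sum_left cscale_mv outer_mv vector_smult_assoc)
    finally show "D *v x = R *v x" .
  qed
  also have "R \<in> opc.span (G I u)"
    unfolding R_def by (intro opc.span_sum opc.span_scale opc.span_base) (auto simp: G_def)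
  finally show ?thesis .
qed

lemma face_in_span:
  fixes A :: "'n::finite op"
  assumes A: "psd_op A" and on: "orthonormal {..<rank A} u"
    and eig: "\<forall>n<rank A. \<exists>c. c \<noteq> 0 \<and> A *v u n = c *s u n"
    and hD: "hermitian_op D" and e: "\<epsilon> > 0"
    and p1: "psd_op (A + \<epsilon> *\<^sub>R D)" and p2: "psd_op (A - \<epsilon> *\<^sub>R D)"
  shows "D \<in> opc.span (G {..<rank A} u)"
proof (rule in_span[OF on _ hD])
  fix z assume "\<forall>j\<in>{..<rank A}. cinner (u j) z = 0"
  then have "A *v z = 0" using perp_kernel[OF psd_herm[OF A] on eig] by auto
  then show "D *v z = 0" by (rule herm_face_kill[OF A hD e p1 p2])
qed simp


lemma rank_nullity_sub:
  fixes f :: "'a::euclidean_space \<Rightarrow> 'b::euclidean_space"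
  assumes lf: "linear f" and V: "subspace V"
  shows "dim {x\<in>V. f x = 0} + dim (f ` V) = dim V"
proof -
  define K where "K = {x\<in>V. f x = 0}"
  have f0: "f 0 = 0" using lf by (rule linear_0)
  have fadd: "f (x + y) = f x + f y" for x y using lf by (simp add: linear_iff)
  have fsc: "f (c *\<^sub>R x) = c *\<^sub>R f x" for c x using lf by (simp add: linear_iff)
  have fdiff: "f (x - y) = f x - f y" for x y using lf by (rule linear_diff)
  have K: "subspace K" using V unfolding K_def subspace_def by (auto simp: f0 fadd fsc)
  define W where "W = {y\<in>V. \<forall>x\<in>K. orthogonal x y}"
  have dW: "dim W + dim K = dim V" unfolding W_def
    by (rule dim_subspace_orthogonal_to_vectors[OF K V]) (auto simp: K_def)
  have W: "subspace W" using V unfolding W_def subspace_def by (auto simp: orthogonal_clauses)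
  have WV: "W \<subseteq> V" unfolding W_def by auto
  have img: "f ` V = f ` W"
  proof
    show "f ` W \<subseteq> f ` V" using WV by auto
    show "f ` V \<subseteq> f ` W"
    proof
      fix b assume "b \<in> f ` V"
      then obtain v where v: "v \<in> V" "b = f v" by blast
      obtain y z where yz: "y \<in> span K" "\<And>w. w \<in> span K \<Longrightarrow> orthogonal z w" "v = y + z"
        using orthogonal_subspace_decomp_exists[of K v] by metis
      have spK: "span K = K" using K by (simp add: span_eq_iff)
      have yK: "y \<in> K" using yz(1) spK by simp
      have yV: "y \<in> V" using yK unfolding K_def by auto
      have "z = v - y" using yz(3) by simp
      then have zV: "z \<in> V" using subspace_diff[OF V v(1) yV] by simp
      have "z \<in> W" unfolding W_def using zV yz(2) spK by (auto simp: orthogonal_commute)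
      moreover have "f z = b" using yz(3) v yK unfolding K_def by (simp add: fadd)
      ultimately show "b \<in> f ` W" by blast
    qed
  qed
  have inj: "inj_on f (span W)"
  proof -
    have sW: "span W = W" using W span_eq_iff by blast
    have "inj_on f W"
    proof (rule inj_onI)
      fix x y assume xy: "x \<in> W" "y \<in> W" "f x = f y"
      have "x - y \<in> W" using W xy by (simp add: subspace_diff)
      moreover have "x - y \<in> V" using subspace_diff[OF V] xy WV by blast
      then have "x - y \<in> K" using xy unfolding K_def by (simp add: fdiff)
      ultimately have "orthogonal (x - y) (x - y)" unfolding W_def by blast
      then show "x = y" by (simp add: orthogonal_def)
    qed
    then show ?thesis unfolding sW .
  qed
  have "dim (f ` W) = dim W" by (rule dim_image_eq[OF lf inj])
  then show ?thesis using dW img K_def by simp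
qed

lemma subspace_tuple:
  assumes "\<And>e. subspace (X e)"
  shows "subspace {D::'a::real_vector^'e::finite. \<forall>e. D$e \<in> X e}"
  using assms unfolding subspace_def by auto

lemma dim_tuple:
  fixes H :: "'e::finite \<Rightarrow> ('a::euclidean_space) set"
  assumes H: "\<And>e. subspace (H e)"
  shows "dim {D::'a^'e. \<forall>e. D$e \<in> H e} = (\<Sum>e\<in>UNIV. dim (H e))"
proof -
  define GF where "GF F = {D::'a^'e. \<forall>e. D$e \<in> (if e \<in> F then H e else {0})}" for F
  have sGF: "subspace (GF F)" for F
    unfolding GF_def by (rule subspace_tuple) (auto simp: H subspace_0)
  have main: "dim (GF F) = (\<Sum>e\<in>F. dim (H e))" if "finite F" for F
    using that
  proof (induction F rule: finite_induct)
    case empty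
    have "GF {} = {0}" unfolding GF_def by (auto simp: vec_eq_iff)
    then show ?case by simp
  next
    case (insert a F)
    define \<iota> where "\<iota> h = (\<chi> e. if e = a then h else 0)" for h :: 'a
    have lin: "linear \<iota>" unfolding linear_iff \<iota>_def by (auto simp: vec_eq_iff)
    have inj: "inj \<iota>" unfolding \<iota>_def inj_def by (auto simp: vec_eq_iff)
    define S where "S = \<iota> ` H a"
    have sS: "subspace S" unfolding S_def by (rule linear_subspace_image[OF lin H])
    have dS: "dim S = dim (H a)" unfolding S_def by (rule dim_image_eq[OF lin]) (use inj in \<open>auto simp: inj_on_def\<close>)
    have sumeq: "GF (insert a F) = {x + y |x y. x \<in> S \<and> y \<in> GF F}"
    proof (intro set_eqI iffI)
      fix D assume D: "D \<in> GF (insert a F)"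
      define y where "y = (\<chi> e. if e = a then 0 else D$e)"
      have "D = \<iota> (D$a) + y" unfolding \<iota>_def y_def by (auto simp: vec_eq_iff)
      moreover have "D$a \<in> H a" using D unfolding GF_def by (metis (mono_tags, lifting) insertI1 mem_Collect_eq)
      then have "\<iota> (D$a) \<in> S" unfolding S_def by blast
      moreover have "y \<in> GF F" unfolding y_def GF_def using D insert(2) unfolding GF_def
        by (auto split: if_splits)
      ultimately show "D \<in> {x + y |x y. x \<in> S \<and> y \<in> GF F}" by blast
    next
      fix D assume "D \<in> {x + y |x y. x \<in> S \<and> y \<in> GF F}"
      then obtain h y where hy: "h \<in> H a" "y \<in> GF F" "D = \<iota> h + y" unfolding S_def by blast
      have "y$a \<in> (if a \<in> F then H a else {0})" using hy(2) unfolding GF_def by blast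
      then have ya: "y$a = 0" using insert(2) by simp
      show "D \<in> GF (insert a F)" unfolding GF_def
      proof (intro CollectI allI)
        fix e
        show "D $ e \<in> (if e \<in> insert a F then H e else {0})"
        proof (cases "e = a")
          case True then show ?thesis using hy ya unfolding \<iota>_def by simp
        next
          case False then show ?thesis using hy(2) unfolding hy(3) \<iota>_def GF_def by auto
        qed
      qed
    qed
    have inter: "S \<inter> GF F = {0}"
    proof (intro equalityI subsetI)
      fix x assume x: "x \<in> S \<inter> GF F"
      then obtain h where "x = \<iota> h" unfolding S_def by blast
      moreover have "x$a \<in> (if a \<in> F then H a else {0})" using x unfolding GF_def by blast
      then have "x$a = 0" using insert(2) by simp
      ultimately show "x \<in> {0}" unfolding \<iota>_def by (auto simp: vec_eq_iff)
    next
      fix x :: "'a^'e" assume "x \<in> {0}"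
      then show "x \<in> S \<inter> GF F" using sS sGF[of F] by (simp add: subspace_0)
    qed
    have "dim (GF (insert a F)) + dim (S \<inter> GF F) = dim S + dim (GF F)"
      unfolding sumeq by (rule dim_sums_Int[OF sS sGF])
    then show ?case using inter dS insert by simp
  qed
  have "GF UNIV = {D::'a^'e. \<forall>e. D$e \<in> H e}" unfolding GF_def by simp
  then show ?thesis using main[of UNIV] by simp
qed

definition tip :: "'n::finite op \<Rightarrow> 'n op \<Rightarrow> complex" where
  "tip X Y = (\<Sum>i\<in>UNIV. \<Sum>j\<in>UNIV. cnj (X$i$j) * Y$i$j)"

lemma tip_outer: "tip (outer a b) (outer c d) = cinner a c * cinner d b"
proof -
  have "tip (outer a b) (outer c d) = (\<Sum>i\<in>UNIV. \<Sum>j\<in>UNIV. (cnj (a$i) * c$i) * (cnj (d$j) * b$j))"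
    by (simp add: tip_def outer_def mult_ac)
  also have "\<dots> = cinner a c * cinner d b" unfolding cinner_def sum_product ..
  finally show ?thesis .
qed

lemma tip_sum_right: "tip X (\<Sum>v\<in>t. cscale (z v) v) = (\<Sum>v\<in>t. z v * tip X v)"
proof (induction t rule: infinite_finite_induct)
  case (infinite A) then show ?case by (simp add: tip_def)
next
  case empty then show ?case by (simp add: tip_def)
next
  case (insert x F)
  then show ?case
    by (simp add: tip_def cscale_def sum.distrib algebra_simps sum_distrib_left)
qed

lemma outer_indep:
  assumes on: "orthonormal I u" and fI: "finite I"
  shows "opc.independent (G I u)" "card (G I u) = card I ^ 2"
proof -
  define f where "f p = outer (u (fst p)) (u (snd p))" for p
  have GI: "G I u = f ` (I \<times> I)" unfolding G_def f_def image_def by force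
  have uu: "cinner (u m) (u n) = (if m = n then 1 else 0)" if "m \<in> I" "n \<in> I" for m n
    using on that unfolding orthonormal_def by blast
  have tipf: "tip (f p) (f q) = (if p = q then 1 else 0)" if "p \<in> I \<times> I" "q \<in> I \<times> I" for p q
    using that unfolding f_def tip_outer by (auto simp: uu prod_eq_iff)
  have inj: "inj_on f (I \<times> I)"
  proof (rule inj_onI)
    fix p q assume pq: "p \<in> I \<times> I" "q \<in> I \<times> I" "f p = f q"
    have "tip (f p) (f q) = 1" using tipf[OF pq(1) pq(1)] pq(3) by simp
    then show "p = q" using tipf[OF pq(1,2)] by (auto split: if_splits)
  qed
  show "card (G I u) = card I ^ 2" unfolding GI card_image[OF inj]
    by (simp add: card_cartesian_product power2_eq_square)
  show "opc.independent (G I u)"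
    unfolding opc.independent_explicit_module
  proof (intro allI impI)
    fix t z v
    assume t: "finite t" "t \<subseteq> G I u" and s0: "(\<Sum>v\<in>t. cscale (z v) v) = 0" and v: "v \<in> t"
    obtain p where p: "p \<in> I \<times> I" "v = f p" using v t(2) unfolding GI by blast
    have "0 = tip v (\<Sum>v\<in>t. cscale (z v) v)" unfolding s0 by (simp add: tip_def)
    also have "\<dots> = (\<Sum>w\<in>t. z w * tip v w)" by (rule tip_sum_right)
    also have "\<dots> = (\<Sum>w\<in>t. z w * (if v = w then 1 else 0))"
    proof (rule sum.cong[OF refl])
      fix w assume "w \<in> t"
      then obtain q where q: "q \<in> I \<times> I" "w = f q" using t(2) unfolding GI by blast
      show "z w * tip v w = z w * (if v = w then 1 else 0)"
        using tipf[OF p(1) q(1)] inj p q by (auto simp: inj_on_def)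
    qed
    also have "\<dots> = z v" by (rule delta_sum[OF t(1) v])
    finally show "z v = 0" by simp
  qed
qed

lemma herm_dim:
  assumes T: "opc.subspace T" and adjT: "\<And>A. A \<in> T \<Longrightarrow> cadj A \<in> T"
  shows "dim {A\<in>T. hermitian_op A} = opc.dim T"
proof -
  define Hm where "Hm = {A\<in>T. hermitian_op A}"
  obtain C where C: "C \<subseteq> Hm" "independent C" "Hm \<subseteq> span C" "card C = dim Hm"
    using basis_exists by blast
  have Cherm: "hermitian_op c" "c \<in> T" if "c \<in> C" for c using C(1) that unfolding Hm_def by auto
  have ind: "opc.independent C"
    unfolding opc.independent_explicit_module
  proof (intro allI impI)
    fix t z v assume t: "finite t" "t \<subseteq> C" and s0: "(\<Sum>v\<in>t. cscale (z v) v) = 0" and v: "v \<in> t"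
    have s1: "(\<Sum>v\<in>t. cscale (cnj (z v)) v) = 0"
    proof -
      have "cadj (\<Sum>v\<in>t. cscale (z v) v) = (\<Sum>v\<in>t. cscale (cnj (z v)) v)"
        unfolding cadj_sum cadj_cscale
        by (rule sum.cong[OF refl]) (use Cherm t(2) in \<open>auto simp: hermitian_op_def\<close>)
      then show ?thesis using s0 by simp
    qed
    have re: "(\<Sum>v\<in>t. (2 * Re (z v)) *\<^sub>R v) = 0"
    proof -
      have "(\<Sum>v\<in>t. (2 * Re (z v)) *\<^sub>R v) = (\<Sum>v\<in>t. cscale (z v) v) + (\<Sum>v\<in>t. cscale (cnj (z v)) v)"
        unfolding sum.distrib[symmetric] scaleR_cscale
        by (rule sum.cong[OF refl]) (simp add: cscale_add2[symmetric] complex_add_cnj)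
      then show ?thesis using s0 s1 by simp
    qed
    have im: "(\<Sum>v\<in>t. (2 * Im (z v)) *\<^sub>R v) = 0"
    proof -
      have "(\<Sum>v\<in>t. (2 * Im (z v)) *\<^sub>R v) = cscale (- \<i>) ((\<Sum>v\<in>t. cscale (z v) v) - (\<Sum>v\<in>t. cscale (cnj (z v)) v))"
        unfolding sum_subtractf[symmetric] opc.scale_sum_right scaleR_cscale
        by (rule sum.cong[OF refl]) (simp add: cscale_def vec_eq_iff complex_eq_iff algebra_simps)
      then show ?thesis using s0 s1 by (simp add: cscale_def vec_eq_iff)
    qed
    have "2 * Re (z v) = 0"
      using real_vector.independentD[OF C(2) t(1) t(2) re v] by simp
    moreover have "2 * Im (z v) = 0"
      using real_vector.independentD[OF C(2) t(1) t(2) im v] by simp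
    ultimately show "z v = 0" by (simp add: complex_eq_iff)
  qed
  have opc_sub_real: "subspace (opc.span C)"
  proof (rule real_vector.subspaceI)
    show "0 \<in> opc.span C" by (rule opc.span_zero)
    show "x + y \<in> opc.span C" if "x \<in> opc.span C" "y \<in> opc.span C" for x y
      using that by (rule opc.span_add)
    show "c *\<^sub>R x \<in> opc.span C" if "x \<in> opc.span C" for c x
      unfolding scaleR_cscale using that by (rule opc.span_scale)
  qed
  have span: "T \<subseteq> opc.span C"
  proof
    fix A assume A: "A \<in> T"
    define X where "X = (1/2::real) *\<^sub>R (A + cadj A)"
    define Y where "Y = cscale (- \<i> / 2) (A - cadj A)"
    have AT: "A + cadj A \<in> T" by (rule opc.subspace_add[OF T A adjT[OF A]])
    have XT: "X \<in> T" unfolding X_def scaleR_cscale by (rule opc.subspace_scale[OF T AT])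
    have Xh: "cadj X = X" unfolding X_def cadj_scaleR cadj_add cadj_cadj by (simp add: add.commute)
    have XH: "X \<in> Hm" unfolding Hm_def hermitian_op_def using XT Xh by blast
    have AT2: "A - cadj A \<in> T" by (rule opc.subspace_diff[OF T A adjT[OF A]])
    have YT: "Y \<in> T" unfolding Y_def by (rule opc.subspace_scale[OF T AT2])
    have Yh: "cadj Y = Y" unfolding Y_def cadj_cscale cadj_diff cadj_cadj
      by (simp add: cscale_def vec_eq_iff algebra_simps)
    have YH: "Y \<in> Hm" unfolding Hm_def hermitian_op_def using YT Yh by blast
    have "X \<in> opc.span C" using XH C(3) span_minimal[OF _ opc_sub_real, of C] by (meson opc.span_superset subset_iff)
    moreover have "Y \<in> opc.span C" using YH C(3) span_minimal[OF _ opc_sub_real, of C] by (meson opc.span_superset subset_iff)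
    moreover have "A = X + cscale \<i> Y"
      unfolding X_def Y_def by (simp add: vec_eq_iff cscale_def cadj_def comp_scaleR2 field_simps)
    ultimately show "A \<in> opc.span C" by (metis opc.span_add opc.span_scale)
  qed
  have CT: "C \<subseteq> T" using C(1) unfolding Hm_def by auto
  have "card C = opc.dim T" by (rule opc.basis_card_eq_dim[OF CT span ind])
  then show ?thesis using C(4) Hm_def by simp
qed


lemma span_cadj:
  assumes B: "\<And>x. x \<in> B \<Longrightarrow> cadj x \<in> B" and X: "X \<in> opc.span B"
  shows "cadj X \<in> opc.span B"
  using X
proof (induction rule: opc.span_induct_alt)
  case base then show ?case by (simp add: opc.span_zero)
next
  case (step c x y)
  have "cadj (cscale c x + y) = cscale (cnj c) (cadj x) + cadj y" by (simp add: cadj_add cadj_cscale)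
  moreover have "cadj x \<in> opc.span B" using B step(1) by (simp add: opc.span_base)
  ultimately show ?case using step(2) by (simp add: opc.span_add opc.span_scale)
qed

lemma G_cadj: "x \<in> G I u \<Longrightarrow> cadj x \<in> G I u"
  unfolding G_def by (auto simp: cadj_outer) blast

lemma span_union_decomp:
  fixes B :: "'e::finite \<Rightarrow> 'n::finite op set"
  assumes X: "X \<in> opc.span (\<Union>e. B e)"
  shows "\<exists>D::('n op)^'e. (\<forall>e. D$e \<in> opc.span (B e)) \<and> X = (\<Sum>e\<in>UNIV. D$e)"
  using X
proof (induction rule: opc.span_induct_alt)
  case base
  show ?case by (rule exI[of _ 0]) (simp add: opc.span_zero)
next
  case (step c x y)
  obtain e0 where e0: "x \<in> B e0" using step(1) by blast
  obtain D where D: "\<forall>e. D$e \<in> opc.span (B e)" "y = (\<Sum>e\<in>UNIV. D$e)" using step(2) by blast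
  define D' where "D' = D + (\<chi> e. if e = e0 then cscale c x else 0)"
  have "\<forall>e. D'$e \<in> opc.span (B e)"
  proof
    fix e
    show "D'$e \<in> opc.span (B e)"
    proof (cases "e = e0")
      case True
      then show ?thesis unfolding D'_def using D(1) e0
        by (simp add: opc.span_add opc.span_scale opc.span_base)
    next
      case False
      then show ?thesis unfolding D'_def using D(1) by simp
    qed
  qed
  moreover have "cscale c x + y = (\<Sum>e\<in>UNIV. D'$e)"
    unfolding D'_def D(2) by (simp add: sum.distrib add.commute)
  ultimately show ?case by blast
qed

lemma quad_comb:
  "cinner x ((a *\<^sub>R A + b *\<^sub>R B) *v x) = of_real a * cinner x (A *v x) + of_real b * cinner x (B *v x)"
  by (simp add: matrix_vector_mult_add_rdistrib scaleR_mv cinner_add_right cinner_scaleR_right)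

lemma psd_comb:
  assumes "psd_op A" "psd_op B" "a \<ge> 0" "b \<ge> 0"
  shows "psd_op (a *\<^sub>R A + b *\<^sub>R B)"
  using assms unfolding psd_op_def
  by (auto simp: herm_add herm_scaleR quad_comb)

lemma psd_id_scale: "c \<ge> 0 \<Longrightarrow> psd_op (c *\<^sub>R (mat 1 :: 'n::finite op))"
proof -
  assume c: "c \<ge> 0"
  have h: "hermitian_op (c *\<^sub>R (mat 1 :: 'n op))" unfolding hermitian_op_def cadj_scaleR cadj_mat1 ..
  have "0 \<le> Re (cinner x ((c *\<^sub>R (mat 1 :: 'n op)) *v x))" for x
    unfolding scaleR_mv cinner_scaleR_right using c cinner_self_ge0[of x] by simp
  then show ?thesis using h unfolding psd_op_def by blast
qed

definition ax :: "'n::finite \<Rightarrow> complex^'n" where "ax i = axis i 1"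

lemma ax_orth: "orthonormal UNIV (ax :: 'n::finite \<Rightarrow> complex^'n)"
proof -
  have e: "cnj (if i = m then 1 else 0) * (if i = n then (1::complex) else 0) = (if i = m then (if m = n then 1 else 0) else 0)" for i m n :: 'n
    by auto
  show ?thesis unfolding orthonormal_def ax_def cinner_def axis_def by (simp add: e)
qed

lemma std_span: "opc.span (G (UNIV::'n::finite set) ax) = UNIV"
proof -
  have "A \<in> opc.span (G UNIV ax)" for A :: "'n op"
  proof -
    have "A = (\<Sum>i\<in>UNIV. \<Sum>j\<in>UNIV. cscale (A$i$j) (outer (ax i) (ax j)))"
    proof (rule vec_eq_iff[THEN iffD2], intro allI, rule vec_eq_iff[THEN iffD2], intro allI)
      fix p q
      have "(\<Sum>i\<in>UNIV. \<Sum>j\<in>UNIV. cscale (A$i$j) (outer (ax i) (ax j))) $ p $ q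
          = (\<Sum>i\<in>UNIV. \<Sum>j\<in>UNIV. if j = q then (if i = p then A$i$j else 0) else 0)"
        unfolding sum_component by (intro sum.cong refl) (simp add: cscale_def outer_def ax_def axis_def)
      also have "\<dots> = A$p$q" by simp
      finally show "A $ p $ q = (\<Sum>i\<in>UNIV. \<Sum>j\<in>UNIV. cscale (A$i$j) (outer (ax i) (ax j))) $ p $ q" by simp
    qed
    also have "\<dots> \<in> opc.span (G UNIV ax)"
      by (intro opc.span_sum opc.span_scale opc.span_base) (auto simp: G_def)
    finally show ?thesis .
  qed
  then show ?thesis by auto
qed

lemma opc_dim_UNIV: "opc.dim (UNIV :: 'n::finite op set) = CARD('n)^2"
proof -
  have "opc.dim (UNIV :: 'n op set) = opc.dim (G (UNIV::'n set) ax)"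
    by (metis opc.dim_span std_span)
  also have "\<dots> = card (G (UNIV::'n set) ax)"
    by (rule opc.dim_eq_card_independent[OF outer_indep(1)[OF ax_orth]]) simp
  also have "\<dots> = CARD('n)^2" by (rule outer_indep(2)[OF ax_orth]) simp
  finally show ?thesis .
qed

lemma herm_full_dim: "dim {A :: 'n::finite op. hermitian_op A} = CARD('n)^2"
proof -
  have "dim {A \<in> (UNIV::'n op set). hermitian_op A} = opc.dim (UNIV :: 'n op set)"
    by (rule herm_dim) auto
  then show ?thesis using opc_dim_UNIV by simp
qed

lemma span_G_dim:
  assumes "orthonormal I u" "finite I"
  shows "opc.dim (opc.span (G I u)) = card I ^ 2"
  using opc.dim_eq_card_independent[OF outer_indep(1)[OF assms]] outer_indep(2)[OF assms] by simp

lemma subspace_herm_part: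
  assumes "opc.subspace T"
  shows "subspace {A\<in>T. hermitian_op A}"
proof (rule real_vector.subspaceI)
  show "0 \<in> {A \<in> T. hermitian_op A}" using assms by (simp add: opc.subspace_0 herm_zero)
  show "x + y \<in> {A \<in> T. hermitian_op A}" if "x \<in> {A \<in> T. hermitian_op A}" "y \<in> {A \<in> T. hermitian_op A}" for x y
    using that assms by (auto simp: opc.subspace_add herm_add)
  show "c *\<^sub>R x \<in> {A \<in> T. hermitian_op A}" if "x \<in> {A \<in> T. hermitian_op A}" for c x
  proof -
    have "c *\<^sub>R x \<in> T" using that assms unfolding scaleR_cscale by (auto intro: opc.subspace_scale)
    moreover have "hermitian_op (c *\<^sub>R x)" using that by (auto intro: herm_scaleR)
    ultimately show ?thesis by blast
  qed
qed

lemma linear_sumvec: "linear (\<lambda>D::('a::real_vector)^'e::finite. \<Sum>e\<in>UNIV. D$e)"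
  unfolding linear_iff by (simp add: sum.distrib scaleR_sum_right)


definition Hh :: "('n::finite op)^'e::finite \<Rightarrow> ('e \<Rightarrow> nat \<Rightarrow> complex^'n) \<Rightarrow> 'e \<Rightarrow> 'n op set" where
  "Hh P v e = {A \<in> opc.span (G {..<rank (P$e)} (v e)). hermitian_op A}"

lemma eb_orth: "eig_basis P v \<Longrightarrow> orthonormal {..<rank (P$e)} (v e)"
  unfolding eig_basis_def orthonormal_def by auto

lemma eb_eig: "eig_basis P v \<Longrightarrow> \<forall>n<rank (P$e). \<exists>c. c \<noteq> 0 \<and> (P$e) *v v e n = c *s v e n"
  unfolding eig_basis_def by auto

lemma eb_eig': "eig_basis P v \<Longrightarrow> \<forall>n\<in>{..<rank (P$e)}. \<exists>c. c \<noteq> 0 \<and> (P$e) *v v e n = c *s v e n"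
  unfolding eig_basis_def by auto

lemma povm_psd: "P \<in> POVMs \<Longrightarrow> psd_op (P$e)" unfolding POVMs_def by auto
lemma povm_sum: "P \<in> POVMs \<Longrightarrow> (\<Sum>e\<in>UNIV. P$e) = mat 1" unfolding POVMs_def by auto

lemma sum_pert: "(\<Sum>e\<in>UNIV. (P + \<delta> *\<^sub>R D)$e) = (\<Sum>e\<in>UNIV. P$e) + \<delta> *\<^sub>R (\<Sum>e\<in>UNIV. D$e)"
  by (simp add: sum.distrib scaleR_sum_right)

lemma char_strong:
  assumes P: "P \<in> POVMs" and eb: "eig_basis P v"
    and D: "\<forall>e. D$e \<in> Hh P v e" and s: "(\<Sum>e\<in>UNIV. D$e) = 0"
  shows "\<exists>\<epsilon>>0. \<forall>\<delta>. \<bar>\<delta>\<bar> \<le> \<epsilon> \<longrightarrow> P + \<delta> *\<^sub>R D \<in> POVMs"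
proof -
  have "\<forall>e. \<exists>\<epsilon>>0. \<forall>\<delta>. \<bar>\<delta>\<bar> \<le> \<epsilon> \<longrightarrow> psd_op (P$e + \<delta> *\<^sub>R D$e)"
  proof
    fix e
    show "\<exists>\<epsilon>>0. \<forall>\<delta>. \<bar>\<delta>\<bar> \<le> \<epsilon> \<longrightarrow> psd_op (P$e + \<delta> *\<^sub>R D$e)"
      using D unfolding Hh_def
      by (intro span_herm_exists[OF povm_psd[OF P] eb_orth[OF eb] _ eb_eig'[OF eb]]) auto
  qed
  then obtain f where f: "\<forall>e. f e > 0 \<and> (\<forall>\<delta>. \<bar>\<delta>\<bar> \<le> f e \<longrightarrow> psd_op (P$e + \<delta> *\<^sub>R D$e))"
    using choice[of "\<lambda>e \<epsilon>. \<epsilon> > 0 \<and> (\<forall>\<delta>. \<bar>\<delta>\<bar> \<le> \<epsilon> \<longrightarrow> psd_op (P$e + \<delta> *\<^sub>R D$e))"] by blast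
  define \<epsilon> where "\<epsilon> = Min (range f)"
  have epos: "\<epsilon> > 0" unfolding \<epsilon>_def using f by (subst Min_gr_iff) auto
  have ele: "\<epsilon> \<le> f e" for e unfolding \<epsilon>_def by (rule Min_le) auto
  have "P + \<delta> *\<^sub>R D \<in> POVMs" if d: "\<bar>\<delta>\<bar> \<le> \<epsilon>" for \<delta>
  proof -
    have "psd_op ((P + \<delta> *\<^sub>R D)$e)" for e
      using f ele[of e] d by simp
    moreover have "(\<Sum>e\<in>UNIV. (P + \<delta> *\<^sub>R D)$e) = mat 1"
      unfolding sum_pert s povm_sum[OF P] by simp
    ultimately show ?thesis unfolding POVMs_def by blast
  qed
  then show ?thesis using epos by blast
qed

lemma face_sub_char:
  assumes P: "P \<in> POVMs" and eb: "eig_basis P v" and D: "D \<in> face_dirs P"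
  shows "(\<forall>e. D$e \<in> Hh P v e) \<and> (\<Sum>e\<in>UNIV. D$e) = 0"
proof -
  obtain \<epsilon> where e: "\<epsilon> > 0" "P + \<epsilon> *\<^sub>R D \<in> POVMs" "P - \<epsilon> *\<^sub>R D \<in> POVMs"
    and h: "\<forall>e. hermitian_op (D$e)"
    using D unfolding face_dirs_def by blast
  have "D$e \<in> Hh P v e" for e
  proof -
    have p1: "psd_op (P$e + \<epsilon> *\<^sub>R D$e)" using povm_psd[OF e(2), of e] by simp
    have p2: "psd_op (P$e - \<epsilon> *\<^sub>R D$e)" using povm_psd[OF e(3), of e] by simp
    have "D$e \<in> opc.span (G {..<rank (P$e)} (v e))"
      by (rule face_in_span[OF povm_psd[OF P] eb_orth[OF eb] eb_eig[OF eb] h[rule_format] e(1) p1 p2])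
    then show ?thesis unfolding Hh_def using h by blast
  qed
  moreover have "(\<Sum>e\<in>UNIV. D$e) = 0"
  proof -
    have "mat 1 = mat 1 + \<epsilon> *\<^sub>R (\<Sum>e\<in>UNIV. D$e)"
      using povm_sum[OF e(2)] unfolding sum_pert povm_sum[OF P] by simp
    then show ?thesis using e(1) by simp
  qed
  ultimately show ?thesis by blast
qed

lemma face_char:
  assumes P: "P \<in> POVMs" and eb: "eig_basis P v"
  shows "face_dirs P = {D. (\<forall>e. D$e \<in> Hh P v e) \<and> (\<Sum>e\<in>UNIV. D$e) = 0}"
proof (intro set_eqI iffI)
  fix D assume "D \<in> face_dirs P"
  then show "D \<in> {D. (\<forall>e. D$e \<in> Hh P v e) \<and> (\<Sum>e\<in>UNIV. D$e) = 0}" using face_sub_char[OF P eb] by blast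
next
  fix D assume D: "D \<in> {D. (\<forall>e. D$e \<in> Hh P v e) \<and> (\<Sum>e\<in>UNIV. D$e) = 0}"
  then obtain \<epsilon> where e: "\<epsilon> > 0" "\<forall>\<delta>. \<bar>\<delta>\<bar> \<le> \<epsilon> \<longrightarrow> P + \<delta> *\<^sub>R D \<in> POVMs"
    using char_strong[OF P eb] by blast
  have "P - \<epsilon> *\<^sub>R D = P + (- \<epsilon>) *\<^sub>R D" by simp
  then have "P - \<epsilon> *\<^sub>R D \<in> POVMs" using e by (metis abs_minus_cancel abs_of_pos order_refl)
  moreover have "P + \<epsilon> *\<^sub>R D \<in> POVMs" using e by simp
  moreover have "\<forall>e. hermitian_op (D$e)" using D unfolding Hh_def by blast
  ultimately show "D \<in> face_dirs P" unfolding face_dirs_def using e(1) by blast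
qed

lemma face_strong:
  assumes P: "P \<in> POVMs" and eb: "eig_basis P v" and D: "D \<in> face_dirs P"
  shows "\<exists>\<epsilon>>0. \<forall>\<delta>. \<bar>\<delta>\<bar> \<le> \<epsilon> \<longrightarrow> P + \<delta> *\<^sub>R D \<in> POVMs"
  using face_sub_char[OF P eb D] char_strong[OF P eb] by blast


lemma subspace_kernel_in:
  assumes lf: "linear f" and V: "subspace V"
  shows "subspace {x\<in>V. f x = 0}"
  using V lf unfolding subspace_def by (auto simp: linear_iff linear_0)

lemma dim_face:
  fixes P :: "('n::finite op)^'e::finite"
  assumes P: "P \<in> POVMs" and eb: "eig_basis P v"
  shows "dim (face_dirs P) + l_num P v = r_num P"
proof -
  define Gt where "Gt = {D::('n op)^'e. \<forall>e. D$e \<in> Hh P v e}"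
  define s where "s = (\<lambda>D::('n op)^'e. \<Sum>e\<in>UNIV. D$e)"
  define Ge where "Ge e = G {..<rank (P$e)} (v e)" for e
  have sHh: "subspace (Hh P v e)" for e
    unfolding Hh_def by (rule subspace_herm_part[OF opc.subspace_span])
  have dHh: "dim (Hh P v e) = rank (P$e)^2" for e
  proof -
    have "dim (Hh P v e) = opc.dim (opc.span (G {..<rank (P$e)} (v e)))"
      unfolding Hh_def by (rule herm_dim[OF opc.subspace_span span_cadj[OF G_cadj]])
    also have "\<dots> = rank (P$e)^2" using span_G_dim[OF eb_orth[OF eb]] by simp
    finally show ?thesis .
  qed
  have sGt: "subspace Gt" unfolding Gt_def by (rule subspace_tuple[OF sHh])
  have dGt: "dim Gt = r_num P" unfolding Gt_def r_num_def dim_tuple[OF sHh] dHh ..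
  have F: "face_dirs P = {D\<in>Gt. s D = 0}" unfolding face_char[OF P eb] Gt_def s_def by blast
  define L where "L = {outer (v e m) (v e n) | e m n. m < rank (P$e) \<and> n < rank (P$e)}"
  have L: "L = (\<Union>e. Ge e)" unfolding L_def Ge_def G_def by blast
  have Lc: "cadj x \<in> L" if "x \<in> L" for x using that unfolding L_def by (auto simp: cadj_outer) blast
  have img: "s ` Gt = {A \<in> opc.span L. hermitian_op A}"
  proof (intro set_eqI iffI)
    fix A assume "A \<in> s ` Gt"
    then obtain D where D: "D \<in> Gt" "A = s D" by blast
    have "D$e \<in> opc.span L" for e
    proof -
      have "D$e \<in> opc.span (Ge e)" using D(1) unfolding Gt_def Hh_def Ge_def by blast
      moreover have "opc.span (Ge e) \<subseteq> opc.span L" unfolding L by (intro opc.span_mono) blast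
      ultimately show ?thesis by blast
    qed
    then have "A \<in> opc.span L" unfolding D(2) s_def by (intro opc.span_sum) auto
    moreover have "hermitian_op A" unfolding D(2) s_def
      using D(1) unfolding Gt_def Hh_def by (intro herm_sum) blast
    ultimately show "A \<in> {A \<in> opc.span L. hermitian_op A}" by blast
  next
    fix A assume A: "A \<in> {A \<in> opc.span L. hermitian_op A}"
    then obtain D :: "('n op)^'e" where D: "\<forall>e. D$e \<in> opc.span (Ge e)" "A = (\<Sum>e\<in>UNIV. D$e)"
      using span_union_decomp[of A Ge] unfolding L by blast
    define H' where "H' = (\<chi> e. (1/2::real) *\<^sub>R (D$e + cadj (D$e)))"
    have "H'$e \<in> Hh P v e" for e
    proof -
      have d1: "D$e \<in> opc.span (Ge e)" using D(1) by blast
      have d2: "cadj (D$e) \<in> opc.span (Ge e)"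
        using span_cadj[OF G_cadj d1[unfolded Ge_def]] unfolding Ge_def .
      have "D$e + cadj (D$e) \<in> opc.span (Ge e)" by (rule opc.span_add[OF d1 d2])
      then have "H'$e \<in> opc.span (Ge e)" unfolding H'_def scaleR_cscale by (simp add: opc.span_scale)
      moreover have "hermitian_op (H'$e)" unfolding H'_def hermitian_op_def
        by (simp add: cadj_scaleR cadj_add add.commute)
      ultimately show ?thesis unfolding Hh_def Ge_def by blast
    qed
    then have "H' \<in> Gt" unfolding Gt_def by blast
    moreover have "s H' = A"
    proof -
      have "s H' = (1/2::real) *\<^sub>R (A + cadj A)"
        unfolding s_def H'_def D(2) cadj_sum scaleR_sum_right sum.distrib[symmetric] by simp
      also have "cadj A = A" using A unfolding hermitian_op_def by blast
      finally show ?thesis by (simp add: scaleR_2[symmetric])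
    qed
    ultimately show "A \<in> s ` Gt" by blast
  qed
  have dimg: "dim (s ` Gt) = l_num P v"
  proof -
    have "dim (s ` Gt) = opc.dim (opc.span L)"
      unfolding img by (rule herm_dim[OF opc.subspace_span span_cadj[OF Lc]])
    also have "\<dots> = l_num P v" unfolding l_num_def L_def by simp
    finally show ?thesis .
  qed
  have "dim {D\<in>Gt. s D = 0} + dim (s ` Gt) = dim Gt"
    unfolding s_def by (rule rank_nullity_sub[OF linear_sumvec sGt])
  then show ?thesis using F dGt dimg by simp
qed

definition Wd :: "(('n::finite op)^'e::finite) set" where
  "Wd = {D. (\<forall>e. hermitian_op (D$e)) \<and> (\<Sum>e\<in>UNIV. D$e) = 0}"

lemma dim_W: "dim (Wd :: (('n::finite op)^'e::finite) set) + CARD('n)^2 = CARD('e) * CARD('n)^2"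
proof -
  define Hf where "Hf = {A :: 'n op. hermitian_op A}"
  have sHf: "subspace Hf" unfolding Hf_def using subspace_herm_part[OF opc.subspace_UNIV] by simp
  define Gf where "Gf = {D::('n op)^'e. \<forall>e. D$e \<in> Hf}"
  have sGf: "subspace Gf" unfolding Gf_def by (rule subspace_tuple) (rule sHf)
  have dGf: "dim Gf = CARD('e) * CARD('n)^2"
    unfolding Gf_def dim_tuple[OF sHf] using herm_full_dim unfolding Hf_def by simp
  define s where "s = (\<lambda>D::('n op)^'e. \<Sum>e\<in>UNIV. D$e)"
  have img: "s ` Gf = Hf"
  proof (intro set_eqI iffI)
    fix A assume "A \<in> s ` Gf"
    then show "A \<in> Hf" unfolding s_def Gf_def Hf_def by (auto intro: herm_sum)
  next
    fix A assume A: "A \<in> Hf"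
    define D :: "('n op)^'e" where "D = (\<chi> e. if e = undefined then A else (0::'n op))"
    have "D \<in> Gf" unfolding D_def Gf_def using A unfolding Hf_def by (auto simp: herm_zero)
    moreover have "s D = A" unfolding s_def D_def by simp
    ultimately show "A \<in> s ` Gf" by blast
  qed
  have W: "Wd = {D\<in>Gf. s D = 0}" unfolding Wd_def Gf_def Hf_def s_def by blast
  have "dim {D\<in>Gf. s D = 0} + dim (s ` Gf) = dim Gf"
    unfolding s_def by (rule rank_nullity_sub[OF linear_sumvec sGf])
  then show ?thesis using W img dGf herm_full_dim[where 'n = 'n] unfolding Hf_def by simp
qed

lemma subspace_Wd: "subspace (Wd :: (('n::finite op)^'e::finite) set)"
proof -
  have "subspace {D::('n op)^'e. \<forall>e. D$e \<in> {A. hermitian_op A}}"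
    by (rule subspace_tuple) (use subspace_herm_part[OF opc.subspace_UNIV] in simp)
  then have "subspace {D\<in>{D::('n op)^'e. \<forall>e. D$e \<in> {A. hermitian_op A}}. (\<Sum>e\<in>UNIV. D$e) = 0}"
    by (rule subspace_kernel_in[OF linear_sumvec])
  moreover have "{D\<in>{D::('n op)^'e. \<forall>e. D$e \<in> {A. hermitian_op A}}. (\<Sum>e\<in>UNIV. D$e) = 0} = Wd"
    unfolding Wd_def by auto
  ultimately show ?thesis by simp
qed

lemma face_sub_W:
  assumes P: "P \<in> POVMs" and eb: "eig_basis P v"
  shows "face_dirs P \<subseteq> Wd"
  unfolding face_char[OF P eb] Wd_def Hh_def by blast

lemma subspace_face:
  assumes P: "P \<in> POVMs" and eb: "eig_basis P v"
  shows "subspace (face_dirs P)"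
proof -
  have sHh: "subspace (Hh P v e)" for e
    unfolding Hh_def by (rule subspace_herm_part[OF opc.subspace_span])
  have "subspace {D\<in>{D. \<forall>e. D$e \<in> Hh P v e}. (\<Sum>e\<in>UNIV. D$e) = 0}"
    by (rule subspace_kernel_in[OF linear_sumvec subspace_tuple[OF sHh]])
  moreover have "{D\<in>{D. \<forall>e. D$e \<in> Hh P v e}. (\<Sum>e\<in>UNIV. D$e) = 0} = face_dirs P"
    unfolding face_char[OF P eb] by blast
  ultimately show ?thesis by simp
qed


lemma lower_pert:
  fixes A D :: "'n::finite op"
  assumes hA: "hermitian_op A" and hD: "hermitian_op D"
    and low: "\<forall>x. c * Re (cinner x x) \<le> Re (cinner x (A *v x))"
    and MD: "(\<Sum>i\<in>UNIV. \<Sum>j\<in>UNIV. cmod (D$i$j)) \<le> M" and d: "\<bar>\<delta>\<bar> * M \<le> c"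
  shows "psd_op (A + \<delta> *\<^sub>R D)"
proof -
  have "0 \<le> Re (cinner x ((A + \<delta> *\<^sub>R D) *v x))" for x
  proof -
    define N where "N = Re (cinner x x)"
    have N0: "N \<ge> 0" unfolding N_def by (rule cinner_self_ge0)
    have b: "\<bar>Re (cinner x (D *v x))\<bar> \<le> (\<Sum>i\<in>UNIV. \<Sum>j\<in>UNIV. cmod (D$i$j)) * N"
      unfolding N_def using Re_cinner_bound[of x D] abs_Re_le_cmod order_trans by blast
    have "\<bar>\<delta> * Re (cinner x (D *v x))\<bar> \<le> \<bar>\<delta>\<bar> * ((\<Sum>i\<in>UNIV. \<Sum>j\<in>UNIV. cmod (D$i$j)) * N)"
      unfolding abs_mult using b by (intro mult_left_mono) auto
    also have "\<dots> \<le> \<bar>\<delta>\<bar> * (M * N)" using MD N0 by (intro mult_left_mono mult_right_mono) auto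
    also have "\<dots> \<le> c * N" using d N0 by (metis mult.assoc mult_right_mono)
    finally have "- (\<delta> * Re (cinner x (D *v x))) \<le> c * N" by simp
    moreover have "c * N \<le> Re (cinner x (A *v x))" using low N_def by blast
    moreover have "cinner x ((A + \<delta> *\<^sub>R D) *v x) = cinner x (A *v x) + of_real \<delta> * cinner x (D *v x)"
      by (simp add: matrix_vector_mult_add_rdistrib scaleR_mv cinner_add_right cinner_scaleR_right)
    ultimately show ?thesis by simp
  qed
  then show ?thesis using herm_add[OF hA herm_scaleR[OF hD]] unfolding psd_op_def by blast
qed

lemma bnd1:
  assumes P: "P \<in> POVMs" and eb: "eig_basis P v" and FW: "face_dirs P = Wd"
  shows "P \<notin> conv_boundary POVMs"
proof
  assume "P \<in> conv_boundary POVMs"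
  then obtain q where q: "q \<in> POVMs"
    and h: "\<forall>\<epsilon>::real. 0 < \<epsilon> \<and> \<epsilon> \<le> 1 \<longrightarrow> P + \<epsilon> *\<^sub>R (q - P) \<in> POVMs \<and> P - \<epsilon> *\<^sub>R (q - P) \<notin> POVMs"
    unfolding conv_boundary_def by blast
  have "q - P \<in> Wd"
    unfolding Wd_def using q P
    by (auto simp: herm_diff psd_herm povm_psd sum_subtractf povm_sum)
  then have "q - P \<in> face_dirs P" using FW by simp
  then obtain \<epsilon> where e: "\<epsilon> > 0" "\<forall>\<delta>. \<bar>\<delta>\<bar> \<le> \<epsilon> \<longrightarrow> P + \<delta> *\<^sub>R (q - P) \<in> POVMs"
    using face_strong[OF P eb] by blast
  define \<epsilon>' where "\<epsilon>' = min \<epsilon> 1"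
  have e': "0 < \<epsilon>'" "\<epsilon>' \<le> 1" "\<bar>- \<epsilon>'\<bar> \<le> \<epsilon>" unfolding \<epsilon>'_def using e by auto
  have "P + (- \<epsilon>') *\<^sub>R (q - P) \<in> POVMs" using e(2) e'(3) by blast
  moreover have "P + (- \<epsilon>') *\<^sub>R (q - P) = P - \<epsilon>' *\<^sub>R (q - P)" by simp
  ultimately show False using h e'(1,2) by metis
qed

lemma bnd2:
  fixes P :: "('n::finite op)^'e::finite"
  assumes P: "P \<in> POVMs" and FW: "face_dirs P \<noteq> Wd" and sub: "face_dirs P \<subseteq> Wd"
  shows "P \<in> conv_boundary POVMs"
proof (rule ccontr)
  assume nb: "P \<notin> conv_boundary POVMs"
  define N where "N = real CARD('e)"
  have Npos: "N > 0" unfolding N_def by simp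
  define q :: "('n op)^'e" where "q = (\<chi> e. (1/N) *\<^sub>R mat 1)"
  have q: "q \<in> POVMs"
  proof -
    have "psd_op (q$e)" for e unfolding q_def using Npos by (simp add: psd_id_scale)
    moreover have "(\<Sum>e\<in>UNIV. q$e) = mat 1"
    proof -
      have "(\<Sum>e\<in>UNIV. q$e) = (\<Sum>e\<in>(UNIV::'e set). (1/N) *\<^sub>R (mat 1 :: 'n op))" unfolding q_def by simp
      also have "\<dots> = real CARD('e) *\<^sub>R ((1/N) *\<^sub>R (mat 1 :: 'n op))" by (rule sum_constant_scaleR)
      also have "\<dots> = mat 1" using Npos unfolding N_def by (simp only: scaleR_scaleR) simp
      finally show ?thesis .
    qed
    ultimately show ?thesis unfolding POVMs_def by blast
  qed
  have plus: "P + \<epsilon> *\<^sub>R (q - P) \<in> POVMs" if e: "0 < \<epsilon>" "\<epsilon> \<le> 1" for \<epsilon>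
  proof -
    have eq: "P + \<epsilon> *\<^sub>R (q - P) = (1 - \<epsilon>) *\<^sub>R P + \<epsilon> *\<^sub>R q" by (simp add: algebra_simps)
    have "psd_op (((1 - \<epsilon>) *\<^sub>R P + \<epsilon> *\<^sub>R q)$e)" for e
      using psd_comb[OF povm_psd[OF P] povm_psd[OF q], of "1 - \<epsilon>" \<epsilon> e] e by simp
    moreover have "(\<Sum>e\<in>UNIV. ((1 - \<epsilon>) *\<^sub>R P + \<epsilon> *\<^sub>R q)$e) = mat 1"
    proof -
      have "(\<Sum>e\<in>UNIV. ((1 - \<epsilon>) *\<^sub>R P + \<epsilon> *\<^sub>R q)$e)
          = (1 - \<epsilon>) *\<^sub>R (\<Sum>e\<in>UNIV. P$e) + \<epsilon> *\<^sub>R (\<Sum>e\<in>UNIV. q$e)"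
        by (simp add: sum.distrib scaleR_sum_right)
      also have "\<dots> = mat 1" unfolding povm_sum[OF P] povm_sum[OF q]
        by (simp add: scaleR_left_distrib[symmetric])
      finally show ?thesis .
    qed
    ultimately show ?thesis unfolding eq POVMs_def by blast
  qed
  have "\<not> (\<forall>\<epsilon>::real. 0 < \<epsilon> \<and> \<epsilon> \<le> 1 \<longrightarrow> P + \<epsilon> *\<^sub>R (q - P) \<in> POVMs \<and> P - \<epsilon> *\<^sub>R (q - P) \<notin> POVMs)"
    using nb q P unfolding conv_boundary_def by blast
  then obtain \<epsilon> where e0: "0 < \<epsilon>" "\<epsilon> \<le> 1"
    "\<not> (P + \<epsilon> *\<^sub>R (q - P) \<in> POVMs \<and> P - \<epsilon> *\<^sub>R (q - P) \<notin> POVMs)" by blast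
  then have e: "0 < \<epsilon>" "\<epsilon> \<le> 1" "P - \<epsilon> *\<^sub>R (q - P) \<in> POVMs" using plus by blast+
  define c where "c = \<epsilon> / (N * (1 + \<epsilon>))"
  have cpos: "c > 0" unfolding c_def using e Npos by simp
  have low: "\<forall>x. c * Re (cinner x x) \<le> Re (cinner x ((P$e) *v x))" for e
  proof
    fix x
    have "psd_op ((P - \<epsilon> *\<^sub>R (q - P))$e)" by (rule povm_psd[OF e(3)])
    then have "0 \<le> Re (cinner x (((P - \<epsilon> *\<^sub>R (q - P))$e) *v x))" unfolding psd_op_def by blast
    also have "cinner x (((P - \<epsilon> *\<^sub>R (q - P))$e) *v x)
        = cinner x ((P$e) *v x) - of_real \<epsilon> * (of_real (1/N) * cinner x x - cinner x ((P$e) *v x))"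
      unfolding q_def
      by (simp add: matrix_vector_mult_diff_rdistrib scaleR_mv cinner_diff_right cinner_scaleR_right)
    finally have "0 \<le> Re (cinner x ((P$e) *v x)) - \<epsilon> * ((1/N) * Re (cinner x x) - Re (cinner x ((P$e) *v x)))"
      by simp
    then have "\<epsilon> / N * Re (cinner x x) \<le> (1 + \<epsilon>) * Re (cinner x ((P$e) *v x))"
      by (simp add: algebra_simps)
    moreover have gen: "a / (1 + \<epsilon>) \<le> b" if "a \<le> (1 + \<epsilon>) * b" for a b
    proof -
      have h1: "0 < 1 + \<epsilon>" using e(1) by simp
      show ?thesis using that h1 by (simp add: pos_divide_le_eq mult.commute)
    qed
    ultimately have "\<epsilon> / N * Re (cinner x x) / (1 + \<epsilon>) \<le> Re (cinner x ((P$e) *v x))"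
      by blast
    moreover have "c * Re (cinner x x) = \<epsilon> / N * Re (cinner x x) / (1 + \<epsilon>)"
      unfolding c_def using Npos e(1) by (simp add: field_simps)
    ultimately show "c * Re (cinner x x) \<le> Re (cinner x ((P$e) *v x))" by simp
  qed
  have "Wd \<subseteq> face_dirs P"
  proof
    fix D :: "('n op)^'e" assume D: "D \<in> Wd"
    then have hD: "\<forall>e. hermitian_op (D$e)" and sD: "(\<Sum>e\<in>UNIV. D$e) = 0" unfolding Wd_def by auto
    define Me where "Me e = (\<Sum>i\<in>UNIV. \<Sum>j\<in>UNIV. cmod (D$e$i$j))" for e
    define M where "M = (\<Sum>e\<in>UNIV. Me e)"
    have Me0: "Me e \<ge> 0" for e unfolding Me_def by (intro sum_nonneg) auto
    have MeM: "Me e \<le> M" for e unfolding M_def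
      by (rule member_le_sum) (auto simp: Me0)
    have M0: "M \<ge> 0" unfolding M_def by (intro sum_nonneg Me0)
    define \<delta> where "\<delta> = c / (M + 1)"
    have dpos: "\<delta> > 0" unfolding \<delta>_def using cpos M0 by simp
    have dM: "\<bar>\<delta>\<bar> * M \<le> c" unfolding \<delta>_def using cpos M0 by (simp add: field_simps)
    have pp: "P + t *\<^sub>R D \<in> POVMs" if t: "\<bar>t\<bar> = \<delta>" for t
    proof -
      have "psd_op ((P + t *\<^sub>R D)$e)" for e
      proof -
        have "psd_op (P$e + t *\<^sub>R D$e)"
          by (rule lower_pert[OF psd_herm[OF povm_psd[OF P]] hD[rule_format] low[of e] _ ])
             (use MeM[of e] t dM in \<open>auto simp: Me_def\<close>)
        then show ?thesis by simp
      qed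
      moreover have "(\<Sum>e\<in>UNIV. (P + t *\<^sub>R D)$e) = mat 1"
        unfolding sum_pert sD povm_sum[OF P] by simp
      ultimately show ?thesis unfolding POVMs_def by blast
    qed
    have "P + \<delta> *\<^sub>R D \<in> POVMs" using pp dpos by simp
    moreover have "P - \<delta> *\<^sub>R D \<in> POVMs" using pp[of "- \<delta>"] dpos by simp
    ultimately show "D \<in> face_dirs P" unfolding face_dirs_def using hD dpos by blast
  qed
  then show False using FW sub by blast
qed


theorem theorem5:
  fixes P :: "(complex^'n^'n)^'e" and v :: "'e \<Rightarrow> nat \<Rightarrow> complex^'n"
  assumes "P \<in> POVMs"
    and "eig_basis P v"
  shows "(P \<in> conv_boundary POVMs \<longleftrightarrow>
           b_num P v < int (CARD('n)^2 * (CARD('e) - 1)))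
       \<and> b_num P v = int (dim (face_dirs P))"
proof -
  have dF: "dim (face_dirs P) + l_num P v = r_num P" by (rule dim_face[OF assms])
  have dW: "dim (Wd :: ((complex^'n^'n)^'e) set) + CARD('n)^2 = CARD('e) * CARD('n)^2" by (rule dim_W)
  have dW': "dim (Wd :: ((complex^'n^'n)^'e) set) = CARD('n)^2 * (CARD('e) - 1)"
  proof -
    have e1: "CARD('n)^2 * (CARD('e) - 1) = CARD('n)^2 * CARD('e) - CARD('n)^2"
      by (simp add: diff_mult_distrib2)
    show ?thesis unfolding e1 using dW by (metis add_diff_cancel_right' mult.commute)
  qed
  have b: "b_num P v = int (dim (face_dirs P))" unfolding b_num_def using dF by linarith
  have sub: "face_dirs P \<subseteq> Wd" by (rule face_sub_W[OF assms])
  have sF: "subspace (face_dirs P)" by (rule subspace_face[OF assms])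
  have sW: "subspace (Wd :: ((complex^'n^'n)^'e) set)" by (rule subspace_Wd)
  have iff: "dim (face_dirs P) < dim (Wd :: ((complex^'n^'n)^'e) set) \<longleftrightarrow> face_dirs P \<noteq> Wd"
  proof
    assume "dim (face_dirs P) < dim (Wd :: ((complex^'n^'n)^'e) set)"
    then show "face_dirs P \<noteq> Wd" by auto
  next
    assume ne: "face_dirs P \<noteq> Wd"
    have le: "dim (face_dirs P) \<le> dim (Wd :: ((complex^'n^'n)^'e) set)" by (rule dim_subset[OF sub])
    show "dim (face_dirs P) < dim (Wd :: ((complex^'n^'n)^'e) set)"
    proof (rule ccontr)
      assume "\<not> dim (face_dirs P) < dim (Wd :: ((complex^'n^'n)^'e) set)"
      then have "dim (Wd :: ((complex^'n^'n)^'e) set) \<le> dim (face_dirs P)" by simp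
      then have "face_dirs P = Wd" by (rule subspace_dim_equal[OF sF sW sub])
      then show False using ne by simp
    qed
  qed
  have bd: "P \<in> conv_boundary POVMs \<longleftrightarrow> face_dirs P \<noteq> Wd"
    using bnd1[OF assms] bnd2[OF assms(1) _ sub] by blast
  have lt: "b_num P v < int (CARD('n)^2 * (CARD('e) - 1)) \<longleftrightarrow>
      dim (face_dirs P) < dim (Wd :: ((complex^'n^'n)^'e) set)"
    unfolding b dW'[symmetric] by (rule of_nat_less_iff)
  show ?thesis using b bd iff lt by blast
qed


end
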